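(* Let $h\ge 3$ and let $m$ be a positive integer with $\omega=\omega(m)\ge 2$, and let $\varpi=\varpi(m)$. Then there are $\mathrm{CC}^h[m]$-circuits of size $2^{O(n^{1/((\omega-1)(h-2)+\varpi)}\log n)}$ computing the $n$-ary conjunction $\mathrm{AND}_n$.
   Context: For an integer $m\ge 1$ and $A\subseteq\{0,\dots,m-1\}$, a gate $\mathrm{MOD}_m^A$ takes finitely many Boolean inputs (counted with multiplicity, since a wire may be connected several times) and outputs $1$ if their sum modulo $m$ lies in $A$, and $0$ otherwise. A $\mathrm{CC}^h[m]$-circuit is a Boolean circuit of depth $h$ all of whose gates are of the form $\mathrm{MOD}_m^A$ (with $A$ possibly different for each gate), with Boolean variable inputs (constants allowed) and multiple wires allowed. The size of a circuit is its number of gates. $\omega(m)$ is the number of distinct prime divisors of $m$, and $\varpi(m)$ is the number of prime divisors $p$ of $m$ with $p\ge\omega(m)$. *)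

theory Defs
  imports Complex_Main "HOL-Computational_Algebra.Primes"
begin

text \<open>A CC[m]-circuit on n variables, given as a list of gates in topological order.
  Gate k (for k < csize C) is a MOD_m^A gate with A = cgA C k.  Its inputs (with multiplicity)
  are: cgconst C k wires from the constant 1 (constant-0 wires do not affect the sum),
  cgvar C k i wires from variable i (i < n), and cggate C k j wires from gate j (j < k).\<close>

record circuit =
  csize :: nat
  cgA :: "nat \<Rightarrow> nat set"
  cgconst :: "nat \<Rightarrow> nat"
  cgvar :: "nat \<Rightarrow> nat \<Rightarrow> nat"
  cggate :: "nat \<Rightarrow> nat \<Rightarrow> nat"
  cout :: nat

primrec gate_vals :: "nat \<Rightarrow> nat \<Rightarrow> circuit \<Rightarrow> (nat \<Rightarrow> bool) \<Rightarrow> nat \<Rightarrow> bool list" where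
  "gate_vals m n C x 0 = []"
| "gate_vals m n C x (Suc k) =
     (let vs = gate_vals m n C x k in
      vs @ [ (cgconst C k + (\<Sum>i<n. cgvar C k i * of_bool (x i))
               + (\<Sum>j<k. cggate C k j * of_bool (vs ! j))) mod m \<in> cgA C k ])"

definition circ_eval :: "nat \<Rightarrow> nat \<Rightarrow> circuit \<Rightarrow> (nat \<Rightarrow> bool) \<Rightarrow> bool" where
  "circ_eval m n C x = gate_vals m n C x (csize C) ! cout C"

primrec gate_depths :: "circuit \<Rightarrow> nat \<Rightarrow> nat list" where
  "gate_depths C 0 = []"
| "gate_depths C (Suc k) =
     (let ds = gate_depths C k in
      ds @ [Suc (Max (insert 0 {ds ! j | j. j < k \<and> cggate C k j > 0}))])"

definition circ_depth :: "circuit \<Rightarrow> nat" where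
  "circ_depth C = Max (insert 0 (set (gate_depths C (csize C))))"

definition is_CC_circuit :: "nat \<Rightarrow> nat \<Rightarrow> nat \<Rightarrow> circuit \<Rightarrow> bool" where
  "is_CC_circuit h m n C \<longleftrightarrow> cout C < csize C \<and> (\<forall>k < csize C. cgA C k \<subseteq> {..<m})
      \<and> circ_depth C = h"

definition computes :: "nat \<Rightarrow> nat \<Rightarrow> circuit \<Rightarrow> ((nat \<Rightarrow> bool) \<Rightarrow> bool) \<Rightarrow> bool" where
  "computes m n C f \<longleftrightarrow> (\<forall>x. circ_eval m n C x = f x)"

definition AND_fun :: "nat \<Rightarrow> (nat \<Rightarrow> bool) \<Rightarrow> bool" where
  "AND_fun n x \<longleftrightarrow> (\<forall>i<n. x i)"

definition omega_m :: "nat \<Rightarrow> nat" where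
  "omega_m m = card (prime_factors m)"

definition varpi_m :: "nat \<Rightarrow> nat" where
  "varpi_m m = card {p \<in> prime_factors m. p \<ge> omega_m m}"

end

theory Submission
  imports Defs "HOL-Library.FuncSet" "HOL-Library.Multiset" "HOL-Number_Theory.Cong" "HOL-Number_Theory.Residues"
begin

datatype form = FV nat | FG "nat set" "form list"

fun fev :: "nat \<Rightarrow> (nat \<Rightarrow> bool) \<Rightarrow> form \<Rightarrow> bool" where
  "fev m x (FV i) = x i"
| "fev m x (FG A fs) = ((sum_list (map (\<lambda>f. of_bool (fev m x f)) fs) :: nat) mod m \<in> A)"

fun fdepth :: "form \<Rightarrow> nat" where
  "fdepth (FV i) = 0"
| "fdepth (FG A fs) = Suc (Max (insert 0 (set (map fdepth fs))))"

fun fsize :: "form \<Rightarrow> nat" where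
  "fsize (FV i) = 0"
| "fsize (FG A fs) = Suc (sum_list (map fsize fs))"

fun fvars :: "form \<Rightarrow> nat set" where
  "fvars (FV i) = {i}"
| "fvars (FG A fs) = \<Union> (set (map fvars fs))"

type_synonym gate = "nat set \<times> (nat \<Rightarrow> nat) \<times> (nat \<Rightarrow> nat)"

definition mkgate :: "nat set \<Rightarrow> (nat + nat) list \<Rightarrow> gate" where
  "mkgate A rs = (A, (\<lambda>i. count_list rs (Inl i)), (\<lambda>j. count_list rs (Inr j)))"

fun comp :: "form \<Rightarrow> gate list \<Rightarrow> gate list \<times> (nat + nat)"
and comps :: "form list \<Rightarrow> gate list \<Rightarrow> gate list \<times> (nat + nat) list" where
  "comp (FV i) gs = (gs, Inl i)"
| "comp (FG A fs) gs = (let (gs', rs) = comps fs gs in (gs' @ [mkgate A rs], Inr (length gs')))"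
| "comps [] gs = (gs, [])"
| "comps (f # fs) gs = (let (gs1, r) = comp f gs; (gs2, rs) = comps fs gs1 in (gs2, r # rs))"

definition mkc :: "gate list \<Rightarrow> nat \<Rightarrow> circuit" where
  "mkc gs oc = \<lparr>csize = length gs, cgA = (\<lambda>k. fst (gs ! k)), cgconst = (\<lambda>_. 0),
     cgvar = (\<lambda>k. fst (snd (gs ! k))), cggate = (\<lambda>k. snd (snd (gs ! k))), cout = oc\<rparr>"

lemma length_gate_vals[simp]: "length (gate_vals m n C x k) = k"
  by (induction k) (auto simp: Let_def)

lemma gate_vals_cong:
  assumes "\<And>j. j < k \<Longrightarrow> cgA C j = cgA C' j \<and> cgconst C j = cgconst C' j \<and>
              cgvar C j = cgvar C' j \<and> cggate C j = cggate C' j"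
  shows "gate_vals m n C x k = gate_vals m n C' x k"
  using assms by (induction k) (auto simp: Let_def)

lemma length_gate_depths[simp]: "length (gate_depths C k) = k"
  by (induction k) (auto simp: Let_def)

lemma gate_depths_cong:
  assumes "\<And>j. j < k \<Longrightarrow> cggate C j = cggate C' j"
  shows "gate_depths C k = gate_depths C' k"
  using assms by (induction k) (auto simp: Let_def)

definition gv :: "nat \<Rightarrow> nat \<Rightarrow> gate list \<Rightarrow> (nat \<Rightarrow> bool) \<Rightarrow> bool list" where
  "gv m n gs x = gate_vals m n (mkc gs 0) x (length gs)"

definition gd :: "gate list \<Rightarrow> nat list" where
  "gd gs = gate_depths (mkc gs 0) (length gs)"

lemma length_gv[simp]: "length (gv m n gs x) = length gs"
  by (simp add: gv_def mkc_def)

lemma length_gd[simp]: "length (gd gs) = length gs"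
  by (simp add: gd_def mkc_def)

lemma gate_vals_mkc_prefix:
  assumes "k \<le> length gs"
  shows "gate_vals m n (mkc (gs @ ext) oc) x k = gate_vals m n (mkc gs oc') x k"
  by (rule gate_vals_cong) (use assms in \<open>auto simp: mkc_def nth_append\<close>)

lemma gate_depths_mkc_prefix:
  assumes "k \<le> length gs"
  shows "gate_depths (mkc (gs @ ext) oc) k = gate_depths (mkc gs oc') k"
  by (rule gate_depths_cong) (use assms in \<open>auto simp: mkc_def nth_append\<close>)

lemma take_gate_vals: "k \<le> k' \<Longrightarrow> take k (gate_vals m n C x k') = gate_vals m n C x k"
proof (induction k')
  case 0 then show ?case by simp
next
  case (Suc k') then show ?case
    by (cases "k = Suc k'") (auto simp: Let_def le_Suc_eq)
qed

lemma take_gate_depths: "k \<le> k' \<Longrightarrow> take k (gate_depths C k') = gate_depths C k"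
proof (induction k')
  case 0 then show ?case by simp
next
  case (Suc k') then show ?case
    by (cases "k = Suc k'") (auto simp: Let_def le_Suc_eq)
qed

lemma gv_prefix: "j < length gs \<Longrightarrow> gv m n (gs @ ext) x ! j = gv m n gs x ! j"
proof -
  assume j: "j < length gs"
  have "gv m n (gs @ ext) x ! j = take (length gs) (gate_vals m n (mkc (gs @ ext) 0) x (length (gs @ ext))) ! j"
    unfolding gv_def using j by simp
  also have "\<dots> = gate_vals m n (mkc (gs @ ext) 0) x (length gs) ! j"
    by (subst take_gate_vals) auto
  also have "\<dots> = gv m n gs x ! j"
    unfolding gv_def by (subst gate_vals_mkc_prefix[where oc'=0]) auto
  finally show ?thesis .
qed

lemma gd_prefix: "j < length gs \<Longrightarrow> gd (gs @ ext) ! j = gd gs ! j"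
proof -
  assume j: "j < length gs"
  have "gd (gs @ ext) ! j = take (length gs) (gate_depths (mkc (gs @ ext) 0) (length (gs @ ext))) ! j"
    unfolding gd_def using j by simp
  also have "\<dots> = gate_depths (mkc (gs @ ext) 0) (length gs) ! j"
    by (subst take_gate_depths) auto
  also have "\<dots> = gd gs ! j"
    unfolding gd_def by (subst gate_depths_mkc_prefix[where oc'=0]) auto
  finally show ?thesis .
qed


lemma gv_snoc: "gv m n (gs @ [g]) x = gv m n gs x @
   [(0 + (\<Sum>i<n. fst (snd g) i * of_bool (x i)) + (\<Sum>j<length gs. snd (snd g) j * of_bool (gv m n gs x ! j))) mod m \<in> fst g]"
proof -
  have e: "gate_vals m n (mkc (gs @ [g]) 0) x (length gs) = gv m n gs x"
    unfolding gv_def by (rule gate_vals_mkc_prefix) auto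
  show ?thesis unfolding gv_def[of m n "gs @ [g]"] using e
    by (simp add: Let_def mkc_def gv_def)
qed

lemma gd_snoc: "gd (gs @ [g]) = gd gs @
   [Suc (Max (insert 0 {gd gs ! j | j. j < length gs \<and> snd (snd g) j > 0}))]"
proof -
  have e: "gate_depths (mkc (gs @ [g]) 0) (length gs) = gd gs"
    unfolding gd_def by (rule gate_depths_mkc_prefix) auto
  show ?thesis unfolding gd_def[of "gs @ [g]"] using e
    by (simp add: Let_def mkc_def gd_def)
qed

lemma sum_refs:
  fixes g :: "nat + nat \<Rightarrow> nat"
  assumes "\<forall>r\<in>set rs. case r of Inl i \<Rightarrow> i < n | Inr j \<Rightarrow> j < k"
  shows "sum_list (map g rs) = (\<Sum>i<n. count_list rs (Inl i) * g (Inl i)) + (\<Sum>j<k. count_list rs (Inr j) * g (Inr j))"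
  using assms
proof (induction rs)
  case Nil then show ?case by simp
next
  case (Cons r rs)
  have IH: "sum_list (map g rs) = (\<Sum>i<n. count_list rs (Inl i) * g (Inl i)) + (\<Sum>j<k. count_list rs (Inr j) * g (Inr j))"
    using Cons by auto
  show ?case
  proof (cases r)
    case (Inl i0)
    with Cons.prems have "i0 < n" by auto
    have "(\<Sum>i<n. count_list (r # rs) (Inl i) * g (Inl i)) = (\<Sum>i<n. (if i = i0 then g (Inl i) else 0) + count_list rs (Inl i) * g (Inl i))"
      by (intro sum.cong) (auto simp: Inl algebra_simps)
    also have "\<dots> = g r + (\<Sum>i<n. count_list rs (Inl i) * g (Inl i))"
      using \<open>i0 < n\<close> by (simp add: sum.distrib Inl)
    finally show ?thesis using IH by (simp add: Inl)
  next
    case (Inr j0)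
    with Cons.prems have "j0 < k" by auto
    have "(\<Sum>j<k. count_list (r # rs) (Inr j) * g (Inr j)) = (\<Sum>j<k. (if j = j0 then g (Inr j) else 0) + count_list rs (Inr j) * g (Inr j))"
      by (intro sum.cong) (auto simp: Inr algebra_simps)
    also have "\<dots> = g r + (\<Sum>j<k. count_list rs (Inr j) * g (Inr j))"
      using \<open>j0 < k\<close> by (simp add: sum.distrib Inr)
    finally show ?thesis using IH by (simp add: Inr)
  qed
qed

definition refval :: "nat \<Rightarrow> nat \<Rightarrow> gate list \<Rightarrow> (nat \<Rightarrow> bool) \<Rightarrow> nat + nat \<Rightarrow> bool" where
  "refval m n gs x r = (case r of Inl i \<Rightarrow> x i | Inr j \<Rightarrow> gv m n gs x ! j)"

definition refdep :: "gate list \<Rightarrow> nat + nat \<Rightarrow> nat" where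
  "refdep gs r = (case r of Inl i \<Rightarrow> 0 | Inr j \<Rightarrow> gd gs ! j)"

definition refok :: "nat \<Rightarrow> nat \<Rightarrow> nat + nat \<Rightarrow> bool" where
  "refok n k r = (case r of Inl i \<Rightarrow> i < n | Inr j \<Rightarrow> j < k)"

lemma refval_prefix: "refok n (length gs) r \<Longrightarrow> refval m n (gs @ ext) x r = refval m n gs x r"
  by (auto simp: refval_def refok_def gv_prefix split: sum.splits)

lemma refdep_prefix: "refok n (length gs) r \<Longrightarrow> refdep (gs @ ext) r = refdep gs r"
  by (auto simp: refdep_def refok_def gd_prefix split: sum.splits)

lemma refok_mono: "refok n k r \<Longrightarrow> k \<le> k' \<Longrightarrow> refok n k' r"
  by (auto simp: refok_def split: sum.splits)

lemma comp_correct: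
  "(comp f gs = (gs', r) \<Longrightarrow> fvars f \<subseteq> {..<n} \<Longrightarrow>
     (\<exists>ext. gs' = gs @ ext \<and> length ext = fsize f) \<and> refok n (length gs') r \<and>
     (\<forall>x. refval m n gs' x r = fev m x f) \<and> refdep gs' r = fdepth f \<and>
     (\<forall>j. length gs \<le> j \<and> j < length gs' \<longrightarrow> gd gs' ! j \<le> fdepth f) \<and>
     (case r of Inl i \<Rightarrow> f = FV i | Inr j \<Rightarrow> j = length gs' - 1 \<and> length gs' > 0))"
  "(comps fs gs = (gs', rs) \<Longrightarrow> (\<forall>f\<in>set fs. fvars f \<subseteq> {..<n}) \<Longrightarrow>
     (\<exists>ext. gs' = gs @ ext \<and> length ext = sum_list (map fsize fs)) \<and> length rs = length fs \<and>
     (\<forall>i<length fs. refok n (length gs') (rs ! i) \<and>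
        (\<forall>x. refval m n gs' x (rs ! i) = fev m x (fs ! i)) \<and> refdep gs' (rs ! i) = fdepth (fs ! i)) \<and>
     (\<forall>j. length gs \<le> j \<and> j < length gs' \<longrightarrow> gd gs' ! j \<le> Max (insert 0 (set (map fdepth fs)))))"
proof (induction f gs and fs gs arbitrary: gs' r and gs' rs rule: comp_comps.induct)
  case (1 i gs)
  then show ?case by (auto simp: refok_def refval_def refdep_def)
next
  case (2 A fs gs)
  obtain gs1 rs where c: "comps fs gs = (gs1, rs)" by (cases "comps fs gs") auto
  from 2(2) c have gs': "gs' = gs1 @ [mkgate A rs]" and r: "r = Inr (length gs1)"
    by auto
  from 2(3) have fv: "\<forall>f\<in>set fs. fvars f \<subseteq> {..<n}" by auto
  from 2(1)[OF c fv] obtain ext where ext: "gs1 = gs @ ext" "length ext = sum_list (map fsize fs)"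
    and lrs: "length rs = length fs"
    and rsok: "\<And>i. i < length fs \<Longrightarrow> refok n (length gs1) (rs ! i)"
    and rsval: "\<And>i x. i < length fs \<Longrightarrow> refval m n gs1 x (rs ! i) = fev m x (fs ! i)"
    and rsdep: "\<And>i. i < length fs \<Longrightarrow> refdep gs1 (rs ! i) = fdepth (fs ! i)"
    and olddep: "\<And>j. length gs \<le> j \<Longrightarrow> j < length gs1 \<Longrightarrow> gd gs1 ! j \<le> Max (insert 0 (set (map fdepth fs)))"
    by blast
  have allok: "\<forall>r\<in>set rs. case r of Inl i \<Rightarrow> i < n | Inr j \<Rightarrow> j < length gs1"
    using rsok lrs by (auto simp: in_set_conv_nth refok_def)
  have val: "fev m x (FG A fs) = gv m n gs' x ! length gs1" for x
  proof -
    have 1: "gv m n gs' x ! length gs1 = (((\<Sum>i<n. count_list rs (Inl i) * of_bool (x i)) +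
        (\<Sum>j<length gs1. count_list rs (Inr j) * of_bool (gv m n gs1 x ! j))) mod m \<in> A)"
      unfolding gs' gv_snoc by (simp add: mkgate_def nth_append)
    have 2: "(\<Sum>i<n. count_list rs (Inl i) * of_bool (x i)) +
        (\<Sum>j<length gs1. count_list rs (Inr j) * of_bool (gv m n gs1 x ! j)) =
        sum_list (map (\<lambda>r. of_bool (refval m n gs1 x r)) rs)"
      by (subst sum_refs[OF allok]) (simp add: refval_def)
    have 3: "map (\<lambda>r. of_bool (refval m n gs1 x r)) rs = map (\<lambda>f. of_bool (fev m x f)) fs"
      by (rule nth_equalityI) (auto simp: lrs rsval)
    have 4: "sum_list (map (\<lambda>r. of_bool (refval m n gs1 x r)) rs) = (sum_list (map (\<lambda>f. of_bool (fev m x f)) fs) :: nat)"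
      using 3 by metis
    show ?thesis using 1 2 4 by simp
  qed
  have dset: "{gd gs1 ! j | j. j < length gs1 \<and> snd (snd (mkgate A rs)) j > 0} \<union> {0} = set (map fdepth fs) \<union> {0}"
  proof (intro equalityI subsetI)
    fix d assume "d \<in> {gd gs1 ! j | j. j < length gs1 \<and> snd (snd (mkgate A rs)) j > 0} \<union> {0}"
    then consider "d = 0" | j where "j < length gs1" "count_list rs (Inr j) > 0" "d = gd gs1 ! j"
      by (auto simp: mkgate_def)
    then show "d \<in> set (map fdepth fs) \<union> {0}"
    proof cases
      case 2
      then have "Inr j \<in> set rs" by (metis count_list_0_iff not_gr0)
      then obtain i where i: "i < length fs" "rs ! i = Inr j" using lrs by (metis in_set_conv_nth)
      then have "fdepth (fs ! i) = d" using rsdep[of i] 2 by (simp add: refdep_def)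
      then show ?thesis using i by auto
    qed auto
  next
    fix d assume "d \<in> set (map fdepth fs) \<union> {0}"
    then consider "d = 0" | i where "i < length fs" "d = fdepth (fs ! i)"
      by (auto simp: in_set_conv_nth)
    then show "d \<in> {gd gs1 ! j | j. j < length gs1 \<and> snd (snd (mkgate A rs)) j > 0} \<union> {0}"
    proof cases
      case 2
      show ?thesis
      proof (cases "rs ! i")
        case (Inl i') then show ?thesis using rsdep[of i] 2 by (simp add: refdep_def)
      next
        case (Inr j)
        have "Inr j \<in> set rs" using 2 lrs Inr by (metis nth_mem)
        then have "count_list rs (Inr j) > 0" by (metis count_list_0_iff neq0_conv)
        moreover have "j < length gs1" using rsok[of i] 2 Inr by (simp add: refok_def)
        ultimately show ?thesis using rsdep[of i] 2 Inr by (auto simp: refdep_def mkgate_def)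
      qed
    qed auto
  qed
  have dep: "gd gs' ! length gs1 = fdepth (FG A fs)"
  proof -
    have "gd gs' ! length gs1 = Suc (Max (insert 0 {gd gs1 ! j | j. j < length gs1 \<and> snd (snd (mkgate A rs)) j > 0}))"
      unfolding gs' gd_snoc by (simp add: nth_append)
    also have "insert 0 {gd gs1 ! j | j. j < length gs1 \<and> snd (snd (mkgate A rs)) j > 0} = insert 0 (set (map fdepth fs))"
      using dset by auto
    finally show ?thesis by simp
  qed
  have fin: "finite (insert 0 (set (map fdepth fs)))" by simp
  show ?case
  proof (intro conjI allI impI)
    show "\<exists>ext. gs' = gs @ ext \<and> length ext = fsize (FG A fs)"
      using ext gs' by (intro exI[of _ "ext @ [mkgate A rs]"]) auto
    show "refok n (length gs') r" using gs' r by (simp add: refok_def)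
    show "refval m n gs' x r = fev m x (FG A fs)" for x using val r by (simp add: refval_def)
    show "refdep gs' r = fdepth (FG A fs)" using dep r by (simp add: refdep_def)
    fix j assume j: "length gs \<le> j \<and> j < length gs'"
    show "gd gs' ! j \<le> fdepth (FG A fs)"
    proof (cases "j < length gs1")
      case True
      then have "gd gs' ! j = gd gs1 ! j" unfolding gs' by (rule gd_prefix)
      also have "\<dots> \<le> Max (insert 0 (set (map fdepth fs)))" using olddep True j by auto
      finally show ?thesis by simp
    next
      case False
      then have "j = length gs1" using j gs' by auto
      then show ?thesis using dep by simp
    qed
  next
    show "case r of Inl i \<Rightarrow> FG A fs = FV i | Inr j \<Rightarrow> j = length gs' - 1 \<and> length gs' > 0"
      using r gs' by simp
  qed
next
  case (3 gs)
  then show ?case by auto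
next
  case (4 f fs gs)
  obtain gs1 r1 where c1: "comp f gs = (gs1, r1)" by (cases "comp f gs") auto
  obtain gs2 rs2 where c2: "comps fs gs1 = (gs2, rs2)" by (cases "comps fs gs1") auto
  from 4(3) c1 c2 have gs': "gs' = gs2" and rs: "rs = r1 # rs2" by auto
  from 4(4) have fv1: "fvars f \<subseteq> {..<n}" and fv2: "\<forall>f\<in>set fs. fvars f \<subseteq> {..<n}" by auto
  note A = 4(1)[OF c1 fv1]
  note B = 4(2)[OF c1[symmetric] refl c2 fv2]
  from A obtain e1 where e1: "gs1 = gs @ e1" "length e1 = fsize f" by blast
  from B obtain e2 where e2: "gs2 = gs1 @ e2" "length e2 = sum_list (map fsize fs)" by blast
  have r1ok: "refok n (length gs1) r1" using A by blast
  show ?case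
  proof (intro conjI allI impI)
    show "\<exists>ext. gs' = gs @ ext \<and> length ext = sum_list (map fsize (f # fs))"
      using e1 e2 gs' by (intro exI[of _ "e1 @ e2"]) auto
    show "length rs = length (f # fs)" using B rs by simp
  next
    fix i assume i: "i < length (f # fs)"
    show "refok n (length gs') (rs ! i)"
    proof (cases i)
      case 0 then show ?thesis using r1ok e2 gs' rs by (auto intro: refok_mono)
    next
      case (Suc i') then show ?thesis using B i gs' rs by auto
    qed
    show "refval m n gs' x (rs ! i) = fev m x ((f # fs) ! i)" for x
    proof (cases i)
      case 0 then show ?thesis using A r1ok e2 gs' rs refval_prefix by auto
    next
      case (Suc i') then show ?thesis using B i gs' rs by auto
    qed
    show "refdep gs' (rs ! i) = fdepth ((f # fs) ! i)"
    proof (cases i)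
      case 0 then show ?thesis using A r1ok e2 gs' rs refdep_prefix by auto
    next
      case (Suc i') then show ?thesis using B i gs' rs by auto
    qed
  next
    fix j assume j: "length gs \<le> j \<and> j < length gs'"
    have fin: "finite (insert 0 (set (map fdepth (f # fs))))" by simp
    have le1: "fdepth f \<le> Max (insert 0 (set (map fdepth (f # fs))))" by (rule Max_ge[OF fin]) auto
    have le2: "Max (insert 0 (set (map fdepth fs))) \<le> Max (insert 0 (set (map fdepth (f # fs))))"
      by (rule Max_mono) auto
    show "gd gs' ! j \<le> Max (insert 0 (set (map fdepth (f # fs))))"
    proof (cases "j < length gs1")
      case True
      then have "gd gs' ! j = gd gs1 ! j" using e2 gs' gd_prefix by auto
      also have "\<dots> \<le> fdepth f" using A True j by auto
      finally show ?thesis using le1 by (rule order_trans)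
    next
      case False
      then have "gd gs' ! j \<le> Max (insert 0 (set (map fdepth fs)))" using B j gs' by auto
      then show ?thesis using le2 by (rule order_trans)
    qed
  qed
qed


fun fAok :: "nat \<Rightarrow> form \<Rightarrow> bool" where
  "fAok m (FV i) = True"
| "fAok m (FG A fs) = (A \<subseteq> {..<m} \<and> (\<forall>f\<in>set fs. fAok m f))"

lemma comp_Aok:
  "(comp f gs = (gs', r) \<Longrightarrow> fAok m f \<Longrightarrow> (\<forall>g\<in>set gs. fst g \<subseteq> {..<m}) \<Longrightarrow> (\<forall>g\<in>set gs'. fst g \<subseteq> {..<m}))"
  "(comps fs gs = (gs', rs) \<Longrightarrow> (\<forall>f\<in>set fs. fAok m f) \<Longrightarrow> (\<forall>g\<in>set gs. fst g \<subseteq> {..<m}) \<Longrightarrow> (\<forall>g\<in>set gs'. fst g \<subseteq> {..<m}))"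
proof (induction f gs and fs gs arbitrary: gs' r and gs' rs rule: comp_comps.induct)
  case (2 A fs gs)
  obtain gs1 rs where c: "comps fs gs = (gs1, rs)" by (cases "comps fs gs") auto
  have "\<forall>g\<in>set gs1. fst g \<subseteq> {..<m}" using 2(1)[OF c] 2(3,4) by auto
  moreover have "gs' = gs1 @ [mkgate A rs]" using 2(2) c by auto
  moreover have "A \<subseteq> {..<m}" using 2(3) by simp
  ultimately show ?case by (auto simp: mkgate_def)
next
  case (4 f fs gs)
  obtain gs1 r1 where c1: "comp f gs = (gs1, r1)" by (cases "comp f gs") auto
  obtain gs2 rs2 where c2: "comps fs gs1 = (gs2, rs2)" by (cases "comps fs gs1") auto
  from 4(3) c1 c2 have gs': "gs' = gs2" by auto
  have "\<forall>g\<in>set gs1. fst g \<subseteq> {..<m}" using 4(1)[OF c1] 4(4,5) by auto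
  then show ?case using 4(2)[OF c1[symmetric] refl c2] 4(4) gs' by auto
qed auto

lemma form_circuit:
  assumes "fvars F \<subseteq> {..<n}" "fAok m F" "fdepth F = h" "h > 0"
  shows "\<exists>C. is_CC_circuit h m n C \<and> (\<forall>x. circ_eval m n C x = fev m x F) \<and> csize C = fsize F"
proof -
  obtain gs r where c: "comp F [] = (gs, r)" by (cases "comp F []") auto
  note cc = comp_correct(1)[OF c assms(1), of m]
  have Aok: "\<forall>g\<in>set gs. fst g \<subseteq> {..<m}" using comp_Aok(1)[OF c assms(2)] by simp
  have r: "r = Inr (length gs - 1)" "length gs > 0"
  proof -
    have "\<not> (\<exists>i. r = Inl i)"
    proof
      assume "\<exists>i. r = Inl i"
      then obtain i where "r = Inl i" by blast
      then have "F = FV i" using cc by simp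
      then show False using assms by simp
    qed
    then obtain j where "r = Inr j" by (cases r) auto
    moreover have "case r of Inl i \<Rightarrow> F = FV i | Inr j \<Rightarrow> j = length gs - 1 \<and> length gs > 0" using cc by blast
    ultimately have "j = length gs - 1 \<and> length gs > 0" by simp
    then show "r = Inr (length gs - 1)" "length gs > 0" using \<open>r = Inr j\<close> by auto
  qed
  define C where "C = mkc gs (length gs - 1)"
  have gvC: "gate_vals m n C x (length gs) = gv m n gs x" for x
    unfolding C_def gv_def by (rule gate_vals_cong) (auto simp: mkc_def)
  have gdC: "gate_depths C (length gs) = gd gs"
    unfolding C_def gd_def by (rule gate_depths_cong) (auto simp: mkc_def)
  have ev: "circ_eval m n C x = fev m x F" for x
  proof -
    have "refval m n gs x r = fev m x F" using cc by blast
    then show ?thesis using r gvC by (simp add: circ_eval_def C_def mkc_def refval_def)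
  qed
  have dep: "circ_depth C = h"
  proof -
    have le: "\<forall>d\<in>set (gd gs). d \<le> h"
      using cc assms(3) by (auto simp: in_set_conv_nth)
    have "refdep gs r = fdepth F" using cc by blast
    then have eq: "gd gs ! (length gs - 1) = h"
      unfolding r(1) refdep_def assms(3) by simp
    have mem: "h \<in> set (gd gs)" using eq r by (metis diff_less length_gd less_numeral_extra(1) nth_mem)
    have "Max (insert 0 (set (gd gs))) = h"
      by (rule Max_eqI) (use le mem in auto)
    then show ?thesis unfolding circ_depth_def using gdC by (simp add: C_def mkc_def)
  qed
  have sz: "csize C = fsize F" using cc by (auto simp: C_def mkc_def)
  have "is_CC_circuit h m n C"
    unfolding is_CC_circuit_def using r Aok dep by (auto simp: C_def mkc_def)
  then show ?thesis using ev sz by blast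
qed


definition lin :: "nat \<Rightarrow> (nat \<Rightarrow> bool) \<Rightarrow> (form \<times> (nat \<Rightarrow> int)) multiset \<Rightarrow> nat \<Rightarrow> int" where
  "lin m x M q = sum_mset (image_mset (\<lambda>p. snd p q * of_bool (fev m x (fst p))) M)"

definition dsem :: "nat \<Rightarrow> nat set \<Rightarrow> (form \<times> (nat \<Rightarrow> int)) multiset \<Rightarrow> (nat \<Rightarrow> int) \<Rightarrow> (nat \<Rightarrow> bool) \<Rightarrow> bool" where
  "dsem m Q M T x = (\<forall>q\<in>Q. [lin m x M q = T q] (mod int q))"

definition wt :: "nat \<Rightarrow> nat set \<Rightarrow> (nat \<Rightarrow> int) \<Rightarrow> nat" where
  "wt m Q w = (\<Sum>q\<in>Q. (m div q) * nat (w q mod int q))"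

definition chm :: "nat \<Rightarrow> nat set \<Rightarrow> (form \<times> (nat \<Rightarrow> int)) multiset \<Rightarrow> form multiset" where
  "chm m Q M = sum_mset (image_mset (\<lambda>p. replicate_mset (wt m Q (snd p)) (fst p)) M)"

definition accA :: "nat \<Rightarrow> nat set \<Rightarrow> (nat \<Rightarrow> int) \<Rightarrow> nat set" where
  "accA m Q T = {t. t < m \<and> (\<forall>q\<in>Q. [int t = int (m div q) * T q] (mod int (q ^ multiplicity q m)))}"

definition msz :: "(form \<times> (nat \<Rightarrow> int)) multiset \<Rightarrow> nat" where
  "msz M = sum_mset (image_mset (\<lambda>p. fsize (fst p)) M)"

definition gf :: "nat \<Rightarrow> nat \<Rightarrow> nat \<Rightarrow> form \<Rightarrow> bool" where
  "gf m n d F \<longleftrightarrow> fvars F \<subseteq> {..<n} \<and> fAok m F \<and> fdepth F \<le> d"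

lemma sum_mset_image_sum_mset:
  "sum_mset (image_mset g (sum_mset (image_mset F M))) = sum_mset (image_mset (\<lambda>p. sum_mset (image_mset g (F p))) M)"
  by (induction M) auto

lemma sum_mset_sum_swap:
  "sum_mset (image_mset (\<lambda>p. \<Sum>q\<in>Q. g q p) M) = (\<Sum>q\<in>Q. sum_mset (image_mset (g q) M))"
  by (induction M) (auto simp: sum.distrib)

lemma crt_accept:
  fixes L :: "nat \<Rightarrow> nat" and T :: "nat \<Rightarrow> int"
  assumes Q: "Q \<subseteq> prime_factors m" and m: "m > 0"
  shows "((\<Sum>q\<in>Q. (m div q) * L q) mod m \<in> accA m Q T) \<longleftrightarrow> (\<forall>q\<in>Q. [int (L q) = T q] (mod int q))"
proof -
  have finQ: "finite Q" using Q finite_subset by blast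
  define S where "S = (\<Sum>q\<in>Q. (m div q) * L q)"
  have key: "[int (S mod m) = int (m div q) * T q] (mod int (q ^ multiplicity q m)) \<longleftrightarrow> [int (L q) = T q] (mod int q)"
    if qQ: "q \<in> Q" for q
  proof -
    have qp: "prime q" "q dvd m" using Q qQ by auto
    define a where "a = multiplicity q m"
    have a1: "a \<ge> 1" using qp m unfolding a_def
      by (simp add: Suc_le_eq prime_multiplicity_gt_zero_iff)
    obtain u where mu: "m = q ^ a * u" and cop: "\<not> q dvd u"
    proof -
      have "m \<noteq> 0" "\<not> is_unit q" using m qp by auto
      from multiplicity_decompose'[OF this] show ?thesis using that unfolding a_def by blast
    qed
    have mq: "m div q = q ^ (a - 1) * u"
      using mu a1 qp by (metis (no_types, lifting) One_nat_def Suc_pred div_mult_self1_is_m le_numeral_extra(2)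
         mult.assoc mult.left_commute nonzero_mult_div_cancel_left not_prime_0 not_one_le_zero power_Suc prime_gt_0_nat neq0_conv)
    have qa_dvd_m: "q ^ a dvd m" using mu by simp
    have other: "q ^ a dvd m div q'" if "q' \<in> Q" "q' \<noteq> q" for q'
    proof -
      have "prime q'" "q' dvd m" using Q that by auto
      have cop': "coprime (q ^ a) q'"
        using \<open>prime q'\<close> qp(1) that(2) by (simp add: primes_coprime coprime_power_left_iff)
      have "q ^ a dvd (m div q') * q'" using qa_dvd_m \<open>q' dvd m\<close> by simp
      then show ?thesis using cop' by (meson coprime_dvd_mult_left_iff)
    qed
    have S_cong: "[int S = int (m div q) * int (L q)] (mod int (q ^ a))"
    proof -
      have "S = (m div q) * L q + (\<Sum>q'\<in>Q - {q}. (m div q') * L q')"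
        unfolding S_def using finQ qQ by (simp add: sum.remove)
      moreover have "q ^ a dvd (\<Sum>q'\<in>Q - {q}. (m div q') * L q')"
        by (intro dvd_sum) (use other in auto)
      ultimately have "int S - int (m div q) * int (L q) = int (\<Sum>q'\<in>Q - {q}. (m div q') * L q')"
        and "int (q ^ a) dvd int (\<Sum>q'\<in>Q - {q}. (m div q') * L q')"
        by (auto simp del: of_nat_sum)
      then show ?thesis unfolding cong_iff_dvd_diff by simp
    qed
    have Smod: "[int (S mod m) = int S] (mod int (q ^ a))"
    proof -
      have "[S mod m = S] (mod m)" by (simp add: cong_def)
      then have "[S mod m = S] (mod q ^ a)" using qa_dvd_m by (rule cong_dvd_modulus_nat)
      then show ?thesis by (metis cong_int_iff of_nat_power)
    qed
    have "[int (S mod m) = int (m div q) * T q] (mod int (q ^ a)) \<longleftrightarrow>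
          [int (m div q) * int (L q) = int (m div q) * T q] (mod int (q ^ a))"
      using Smod S_cong by (meson cong_sym cong_trans)
    also have "\<dots> \<longleftrightarrow> int (q ^ a) dvd int (q ^ (a - 1)) * (int u * (int (L q) - T q))"
      unfolding cong_iff_dvd_diff mq by (simp add: algebra_simps)
    also have "\<dots> \<longleftrightarrow> int q dvd int u * (int (L q) - T q)"
    proof -
      have "int (q ^ a) = int (q ^ (a - 1)) * int q" using a1
        by (metis Suc_diff_le diff_Suc_1 mult.commute of_nat_mult power_Suc)
      moreover have "int (q ^ (a - 1)) \<noteq> 0" using qp by (simp add: prime_gt_0_nat)
      ultimately show ?thesis by (metis dvd_mult_cancel_left mult.commute)
    qed
    also have "\<dots> \<longleftrightarrow> int q dvd (int (L q) - T q)"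
    proof -
      have "prime (int q)" using qp by simp
      moreover have "\<not> int q dvd int u" using cop by simp
      ultimately show ?thesis by (meson dvd_mult prime_dvd_mult_iff)
    qed
    also have "\<dots> \<longleftrightarrow> [int (L q) = T q] (mod int q)"
      by (simp add: cong_iff_dvd_diff)
    finally show ?thesis unfolding a_def .
  qed
  show ?thesis
    unfolding S_def[symmetric] accA_def using key m by auto
qed


lemma card_prime_factors_le: "m > 0 \<Longrightarrow> card (prime_factors m) \<le> m"
proof -
  assume "m > 0"
  have "prime_factors m \<subseteq> {1..m}"
    using \<open>m > 0\<close> by (auto simp: in_prime_factors_iff dvd_imp_le prime_gt_0_nat Suc_le_eq)
  then have "card (prime_factors m) \<le> card {1..m}" by (rule card_mono[rotated]) auto
  then show ?thesis by simp
qed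

lemma wt_le:
  assumes Q: "Q \<subseteq> prime_factors m" and m: "m > 0"
  shows "wt m Q w \<le> m * m"
proof -
  have finQ: "finite Q" using Q finite_subset by blast
  have "wt m Q w \<le> (\<Sum>q\<in>Q. m)"
    unfolding wt_def
  proof (intro sum_mono)
    fix q assume qQ: "q \<in> Q"
    then have qp: "prime q" using Q by auto
    then have q0: "q > 0" by (simp add: prime_gt_0_nat)
    have "w q mod int q < int q" using q0 by simp
    then have "nat (w q mod int q) \<le> q" by linarith
    then have "(m div q) * nat (w q mod int q) \<le> (m div q) * q" by simp
    also have "\<dots> \<le> m" by simp
    finally show "(m div q) * nat (w q mod int q) \<le> m" .
  qed
  also have "\<dots> = card Q * m" by simp
  also have "\<dots> \<le> m * m"
  proof -
    have "card Q \<le> card (prime_factors m)" using Q by (intro card_mono) auto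
    also have "\<dots> \<le> m" using card_prime_factors_le m by blast
    finally show ?thesis by simp
  qed
  finally show ?thesis .
qed

lemma sum_mset_mod_cong:
  fixes q :: int
  shows "[sum_mset (image_mset (\<lambda>p. (f p mod q) * g p) M) = sum_mset (image_mset (\<lambda>p. f p * g p) M)] (mod q)"
proof (induction M)
  case empty then show ?case by simp
next
  case (add x M)
  have "[(f x mod q) * g x = f x * g x] (mod q)" by (simp add: cong_def mod_mult_left_eq)
  then show ?case using add by (simp add: cong_add)
qed

lemma realize:
  assumes Q: "Q \<subseteq> prime_factors m" and m: "m > 0" and good: "\<forall>p\<in>#M. gf m n d (fst p)"
  shows "\<exists>F. gf m n (Suc d) F \<and> (\<forall>x. fev m x F = dsem m Q M T x) \<and> fsize F \<le> 1 + m * m * msz M"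
proof -
  obtain fs where fs: "mset fs = chm m Q M" using ex_mset by blast
  define F where "F = FG (accA m Q T) fs"
  have sum_fs: "sum_list (map g fs) = sum_mset (image_mset (\<lambda>p. wt m Q (snd p) * g (fst p)) M)" for g :: "form \<Rightarrow> nat"
  proof -
    have "sum_list (map g fs) = sum_mset (image_mset g (mset fs))"
      by (metis mset_map sum_mset_sum_list)
    also have "\<dots> = sum_mset (image_mset g (chm m Q M))" using fs by simp
    also have "\<dots> = sum_mset (image_mset (\<lambda>p. wt m Q (snd p) * g (fst p)) M)"
      unfolding chm_def sum_mset_image_sum_mset by simp
    finally show ?thesis .
  qed
  have ev: "fev m x F = dsem m Q M T x" for x
  proof -
    define L where "L q = sum_mset (image_mset (\<lambda>p. nat (snd p q mod int q) * of_bool (fev m x (fst p))) M)" for q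
    have "sum_list (map (\<lambda>f. of_bool (fev m x f)) fs) = (\<Sum>q\<in>Q. (m div q) * L q)"
      unfolding sum_fs wt_def L_def
      by (simp add: sum_distrib_right sum_mset_sum_swap sum_mset_distrib_left mult.assoc)
    then have "fev m x F \<longleftrightarrow> (\<forall>q\<in>Q. [int (L q) = T q] (mod int q))"
      unfolding F_def using crt_accept[OF Q m] by simp
    also have "\<dots> \<longleftrightarrow> dsem m Q M T x"
      unfolding dsem_def
    proof (intro ball_cong refl)
      fix q assume "q \<in> Q"
      then have q0: "q > 0" using Q prime_gt_0_nat by auto
      have "int (L q) = sum_mset (image_mset (\<lambda>p. (snd p q mod int q) * of_bool (fev m x (fst p))) M)"
        unfolding L_def of_nat_sum_mset using q0 by (simp add: multiset.map_comp o_def)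
      then have "[int (L q) = lin m x M q] (mod int q)"
        unfolding lin_def using sum_mset_mod_cong[of "\<lambda>p. snd p q" "int q" "\<lambda>p. of_bool (fev m x (fst p))" M] by simp
      then show "[int (L q) = T q] (mod int q) \<longleftrightarrow> [lin m x M q = T q] (mod int q)"
        by (meson cong_sym cong_trans)
    qed
    finally show ?thesis .
  qed
  have fin: "finite (insert 0 (set (map fdepth fs)))" by simp
  have chset: "f \<in> set fs \<Longrightarrow> \<exists>p\<in>#M. fst p = f" for f
  proof -
    assume "f \<in> set fs"
    then have "f \<in># chm m Q M" using fs by (metis set_mset_mset)
    then show ?thesis unfolding chm_def by (auto split: if_splits)
  qed
  have "gf m n (Suc d) F"
    unfolding gf_def F_def
  proof (intro conjI)
    show "fvars (FG (accA m Q T) fs) \<subseteq> {..<n}"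
      using chset good by (fastforce simp: gf_def)
    show "fAok m (FG (accA m Q T) fs)"
      using chset good by (fastforce simp: gf_def accA_def)
    have "Max (insert 0 (set (map fdepth fs))) \<le> d"
      using chset good by (subst Max_le_iff) (fastforce simp: gf_def)+
    then show "fdepth (FG (accA m Q T) fs) \<le> Suc d" by simp
  qed
  moreover have "fsize F \<le> 1 + m * m * msz M"
  proof -
    have "fsize F = Suc (sum_mset (image_mset (\<lambda>p. wt m Q (snd p) * fsize (fst p)) M))"
      unfolding F_def using sum_fs by simp
    also have "sum_mset (image_mset (\<lambda>p. wt m Q (snd p) * fsize (fst p)) M) \<le>
               sum_mset (image_mset (\<lambda>p. m * m * fsize (fst p)) M)"
      by (intro sum_mset_mono mult_right_mono wt_le[OF Q m]) auto
    also have "\<dots> = m * m * msz M" unfolding msz_def by (simp add: sum_mset_distrib_left)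
    finally show ?thesis by simp
  qed
  ultimately show ?thesis using ev by blast
qed


definition cntq :: "nat \<Rightarrow> nat set \<Rightarrow> (nat \<Rightarrow> int) \<Rightarrow> int \<Rightarrow> int" where
  "cntq q V v t = (\<Sum>a\<in>PiE V (\<lambda>_. {..<q}). of_bool ([(\<Sum>j\<in>V. int (a j) * v j) = t] (mod int q)))"

lemma cntq_cong: "[t = t'] (mod int q) \<Longrightarrow> cntq q V v t = cntq q V v t'"
proof -
  assume h: "[t = t'] (mod int q)"
  have "\<And>s. [s = t] (mod int q) \<longleftrightarrow> [s = t'] (mod int q)" using h by (meson cong_sym cong_trans)
  then show ?thesis by (simp add: cntq_def)
qed

lemma cntq_total:
  assumes "finite V" "q > 0"
  shows "(\<Sum>u<q. cntq q V v (int u)) = int q ^ card V"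
proof -
  have "(\<Sum>u<q. cntq q V v (int u)) = (\<Sum>a\<in>PiE V (\<lambda>_. {..<q}). \<Sum>u<q. of_bool ([(\<Sum>j\<in>V. int (a j) * v j) = int u] (mod int q)))"
    unfolding cntq_def by (rule sum.swap)
  also have "\<dots> = (\<Sum>a\<in>PiE V (\<lambda>_. {..<q}). 1)"
  proof (intro sum.cong refl)
    fix a
    define s where "s = (\<Sum>j\<in>V. int (a j) * v j)"
    have "(\<Sum>u<q. of_bool ([s = int u] (mod int q)) :: int) = (\<Sum>u\<in>{nat (s mod int q)}. 1)"
    proof (rule sum.mono_neutral_cong_right)
      show "{nat (s mod int q)} \<subseteq> {..<q}" using assms(2) by (simp add: nat_less_iff)
      show "\<forall>i\<in>{..<q} - {nat (s mod int q)}. of_bool ([s = int i] (mod int q)) = (0::int)"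
        using assms(2) by (auto simp: cong_def)
      show "\<And>x. x \<in> {nat (s mod int q)} \<Longrightarrow> of_bool ([s = int x] (mod int q)) = (1::int)"
        using assms(2) by (auto simp: cong_def)
    qed auto
    then show "(\<Sum>u<q. of_bool ([(\<Sum>j\<in>V. int (a j) * v j) = int u] (mod int q)) :: int) = 1"
      unfolding s_def by simp
  qed
  also have "\<dots> = int q ^ card V" using assms by (simp add: card_PiE)
  finally show ?thesis .
qed

lemma sum_PiE_insert:
  fixes g :: "(nat \<Rightarrow> nat) \<Rightarrow> int"
  assumes "finite V" "j \<notin> V"
  shows "(\<Sum>a\<in>PiE (insert j V) B. g a) = (\<Sum>x\<in>B j. \<Sum>a\<in>PiE V B. g (a(j := x)))"
proof -
  have "(\<Sum>a\<in>PiE (insert j V) B. g a) = (\<Sum>(x, a)\<in>B j \<times> PiE V B. g (a(j := x)))"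
    using assms
    by (intro sum.reindex_bij_witness[of _ "\<lambda>(y,g). g(j := y)" "\<lambda>g. (g j, g(j := undefined))"])
       (auto simp: PiE_def extensional_def)
  also have "\<dots> = (\<Sum>x\<in>B j. \<Sum>a\<in>PiE V B. g (a(j := x)))"
    by (rule sum.cartesian_product[symmetric])
  finally show ?thesis .
qed

lemma cntq_formula:
  assumes "finite V" "prime q"
  shows "cntq q V v t = (if (\<forall>j\<in>V. int q dvd v j) then (if int q dvd t then int q ^ card V else 0) else int q ^ (card V - 1))"
  using assms(1)
proof (induction V arbitrary: t rule: finite_induct)
  case empty
  have "[0 = t] (mod int q) \<longleftrightarrow> int q dvd t" by (simp add: cong_iff_dvd_diff)
  then show ?case by (simp add: cntq_def)
next
  case (insert j V)
  have q0: "q > 0" using assms(2) prime_gt_0_nat by blast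
  have step: "cntq q (insert j V) v t = (\<Sum>x<q. cntq q V v (t - int x * v j))"
  proof -
    have "cntq q (insert j V) v t = (\<Sum>x<q. \<Sum>a\<in>PiE V (\<lambda>_. {..<q}).
        of_bool ([(\<Sum>i\<in>insert j V. int ((a(j := x)) i) * v i) = t] (mod int q)))"
      unfolding cntq_def by (rule sum_PiE_insert[OF insert(1,2)])
    also have "\<dots> = (\<Sum>x<q. cntq q V v (t - int x * v j))"
    proof (intro sum.cong refl)
      fix x
      show "(\<Sum>a\<in>PiE V (\<lambda>_. {..<q}). of_bool ([(\<Sum>i\<in>insert j V. int ((a(j := x)) i) * v i) = t] (mod int q))) =
            cntq q V v (t - int x * v j)"
        unfolding cntq_def
      proof (intro sum.cong refl)
        fix a
        have "(\<Sum>i\<in>insert j V. int ((a(j := x)) i) * v i) = int x * v j + (\<Sum>i\<in>V. int (a i) * v i)"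
          using insert(1,2) by (simp add: sum.insert) (intro sum.cong, auto)
        then show "of_bool ([(\<Sum>i\<in>insert j V. int ((a(j := x)) i) * v i) = t] (mod int q)) =
            (of_bool ([(\<Sum>i\<in>V. int (a i) * v i) = t - int x * v j] (mod int q)) :: int)"
          by (simp add: cong_iff_dvd_diff algebra_simps)
      qed
    qed
    finally show ?thesis .
  qed
  show ?case
  proof (cases "int q dvd v j")
    case True
    have "cntq q (insert j V) v t = (\<Sum>x<q. cntq q V v t)"
      unfolding step
    proof (intro sum.cong refl cntq_cong)
      fix x show "[t - int x * v j = t] (mod int q)"
        using True by (simp add: cong_iff_dvd_diff)
    qed
    also have "\<dots> = int q * cntq q V v t" by simp
    finally have e: "cntq q (insert j V) v t = int q * cntq q V v t" .
    show ?thesis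
    proof (cases "\<forall>i\<in>V. int q dvd v i")
      case True2: True
      then show ?thesis using e insert True by simp
    next
      case False
      then have "V \<noteq> {}" by auto
      then have "card V \<ge> 1" using insert(1) by (simp add: Suc_le_eq card_gt_0_iff)
      then have "int q * int q ^ (card V - 1) = int q ^ card V"
        by (metis Suc_diff_le diff_Suc_1 power_Suc)
      have nall: "\<not> (\<forall>i\<in>insert j V. int q dvd v i)" using False by auto
      have "card (insert j V) = Suc (card V)" using insert(1,2) by simp
      then have "cntq q (insert j V) v t = int q ^ (card (insert j V) - 1)"
        using e insert(3)[of t] False \<open>int q * int q ^ (card V - 1) = int q ^ card V\<close> by simp
      then show ?thesis by (subst if_not_P[OF nall])
    qed
  next
    case False
    have "cntq q (insert j V) v t = (\<Sum>u<q. cntq q V v (int u))"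
    proof -
      define f where "f x = nat ((t - int x * v j) mod int q)" for x
      have bij: "bij_betw f {..<q} {..<q}"
      proof -
        have inj: "inj_on f {..<q}"
        proof (rule inj_onI)
          fix x y assume xy: "x \<in> {..<q}" "y \<in> {..<q}" "f x = f y"
          have nn: "(t - int x * v j) mod int q \<ge> 0" "(t - int y * v j) mod int q \<ge> 0" using q0 by auto
          then have "(t - int x * v j) mod int q = (t - int y * v j) mod int q"
            using xy(3) unfolding f_def by (metis nat_eq_iff2)
          then have "int q dvd (t - int x * v j) - (t - int y * v j)"
            by (simp add: mod_eq_dvd_iff)
          then have "int q dvd (int y - int x) * v j" by (simp add: algebra_simps)
          moreover have "prime (int q)" using assms(2) by simp
          ultimately have d: "int q dvd (int y - int x)"
            using False by (meson prime_dvd_mult_iff)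
          show "x = y"
          proof (rule ccontr)
            assume "x \<noteq> y"
            then have "int y - int x \<noteq> 0" by simp
            from dvd_imp_le_int[OF this d] have "int q \<le> \<bar>int y - int x\<bar>" by simp
            moreover have "\<bar>int y - int x\<bar> < int q" using xy by auto
            ultimately show False by simp
          qed
        qed
        moreover have "f ` {..<q} \<subseteq> {..<q}" using q0 by (auto simp: f_def nat_less_iff)
        ultimately show ?thesis
          unfolding bij_betw_def using endo_inj_surj[of "{..<q}" f] by auto
      qed
      have "(\<Sum>x<q. cntq q V v (t - int x * v j)) = (\<Sum>x<q. cntq q V v (int (f x)))"
        by (intro sum.cong refl cntq_cong) (use q0 in \<open>simp add: f_def cong_def\<close>)
      also have "\<dots> = (\<Sum>u<q. cntq q V v (int u))"
        using sum.reindex_bij_betw[OF bij, of "\<lambda>u. cntq q V v (int u)"] by simp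
      finally show ?thesis using step by simp
    qed
    also have "\<dots> = int q ^ card V" by (rule cntq_total[OF insert(1) q0])
    finally show ?thesis using False insert by simp
  qed
qed

lemma count_identity:
  fixes V :: "nat set"
  assumes "finite V" "prime q"
  shows "(\<Sum>a\<in>PiE V (\<lambda>_. {..<q}). of_bool ([(\<Sum>j\<in>V. int (a j) * v j) = 0] (mod int q))
                                   - of_bool ([(\<Sum>j\<in>V. int (a j) * v j) = 1] (mod int q)))
         = int q ^ card V * of_bool (\<forall>j\<in>V. int q dvd v j)"
proof -
  have "q \<noteq> 1" using assms(2) by (metis not_prime_1)
  then have n1: "\<not> int q dvd 1" by simp
  have "(\<Sum>a\<in>PiE V (\<lambda>_. {..<q}). of_bool ([(\<Sum>j\<in>V. int (a j) * v j) = 0] (mod int q))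
                                   - of_bool ([(\<Sum>j\<in>V. int (a j) * v j) = 1] (mod int q)) :: int)
        = cntq q V v 0 - cntq q V v 1"
    unfolding cntq_def by (rule sum_subtractf)
  also have "\<dots> = int q ^ card V * of_bool (\<forall>j\<in>V. int q dvd v j)"
    unfolding cntq_formula[OF assms, of v 0] cntq_formula[OF assms, of v 1] using n1 by simp
  finally show ?thesis .
qed


definition Phi :: "nat set \<Rightarrow> nat set \<Rightarrow> (nat \<Rightarrow> (nat \<Rightarrow> nat) \<times> nat) set" where
  "Phi V Q0 = PiE Q0 (\<lambda>q'. PiE V (\<lambda>_. {..<q'}) \<times> {0, 1})"

definition sgnp :: "nat set \<Rightarrow> (nat \<Rightarrow> (nat \<Rightarrow> nat) \<times> nat) \<Rightarrow> int" where
  "sgnp Q0 \<phi> = (\<Prod>q'\<in>Q0. if snd (\<phi> q') = 0 then 1 else -1)"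

definition Mphi :: "(nat \<Rightarrow> (form \<times> (nat \<Rightarrow> int)) multiset) \<Rightarrow> nat set \<Rightarrow> (nat \<Rightarrow> (nat \<Rightarrow> nat) \<times> nat) \<Rightarrow> (form \<times> (nat \<Rightarrow> int)) multiset" where
  "Mphi Mj V \<phi> = (\<Sum>j\<in>V. image_mset (\<lambda>p. (fst p, \<lambda>q'. int (fst (\<phi> q') j) * snd p q')) (Mj j))"

definition Tphi :: "(nat \<Rightarrow> nat \<Rightarrow> int) \<Rightarrow> nat set \<Rightarrow> (nat \<Rightarrow> (nat \<Rightarrow> nat) \<times> nat) \<Rightarrow> nat \<Rightarrow> int" where
  "Tphi Tj V \<phi> q' = (\<Sum>j\<in>V. int (fst (\<phi> q') j) * Tj j q') + int (snd (\<phi> q'))"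

lemma lin_add: "lin m x (A + B) q = lin m x A q + lin m x B q"
  by (simp add: lin_def)

lemma lin_sum: "lin m x (\<Sum>j\<in>V. N j) q = (\<Sum>j\<in>V. lin m x (N j) q)"
proof (cases "finite V")
  case True then show ?thesis by (induction V rule: finite_induct) (auto simp: lin_add, simp add: lin_def)
next
  case False then show ?thesis by (simp add: lin_def)
qed

lemma lin_scale: "lin m x (image_mset (\<lambda>p. (fst p, \<lambda>q'. c q' * snd p q')) N) q = c q * lin m x N q"
  by (induction N) (auto simp: lin_def algebra_simps)

lemma lin_Mphi: "lin m x (Mphi Mj V \<phi>) q = (\<Sum>j\<in>V. int (fst (\<phi> q) j) * lin m x (Mj j) q)"
  unfolding Mphi_def lin_sum lin_scale by simp

lemma msz_add: "msz (A + B) = msz A + msz B" by (simp add: msz_def)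

lemma msz_Mphi: "finite V \<Longrightarrow> msz (Mphi Mj V \<phi>) = (\<Sum>j\<in>V. msz (Mj j))"
proof -
  assume "finite V"
  then show ?thesis unfolding Mphi_def
    by (induction V rule: finite_induct) (auto simp: msz_add msz_def multiset.map_comp o_def)
qed

lemma Mphi_mem: "p \<in># Mphi Mj V \<phi> \<Longrightarrow> \<exists>j\<in>V. \<exists>p'\<in># Mj j. fst p = fst p'"
  unfolding Mphi_def
proof (induction V rule: infinite_finite_induct)
  case (insert j V) then show ?case by (auto simp: sum.insert) (metis fst_conv)
qed auto

lemma of_bool_ball_prod: "finite A \<Longrightarrow> (of_bool (\<forall>a\<in>A. P a) :: int) = (\<Prod>a\<in>A. of_bool (P a))"
  by (induction A rule: finite_induct) auto

lemma finite_Phi: "finite V \<Longrightarrow> finite Q0 \<Longrightarrow> finite (Phi V Q0)"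
  unfolding Phi_def by (intro finite_PiE finite_cartesian_product) auto

lemma card_Phi:
  assumes "finite V" "finite Q0"
  shows "card (Phi V Q0) = (\<Prod>q'\<in>Q0. q' ^ card V * 2)"
  unfolding Phi_def using assms by (simp add: card_PiE card_cartesian_product mult_2_right)

lemma collapse:
  assumes V: "finite V" and Q0: "finite Q0" "\<forall>q'\<in>Q0. prime q'"
  shows "(\<Prod>q'\<in>Q0. int q' ^ card V) * of_bool (\<forall>j\<in>V. dsem m Q0 (Mj j) (Tj j) x)
       = (\<Sum>\<phi>\<in>Phi V Q0. sgnp Q0 \<phi> * of_bool (dsem m Q0 (Mphi Mj V \<phi>) (Tphi Tj V \<phi>) x))"
proof -
  define v where "v q' j = lin m x (Mj j) q' - Tj j q'" for q' j
  define g where "g q' ae = (if snd ae = 0 then 1 else -1) *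
      (of_bool ([(\<Sum>j\<in>V. int (fst ae j) * v q' j) = int (snd ae)] (mod int q')) :: int)" for q' ae
  have lhs: "of_bool (\<forall>j\<in>V. dsem m Q0 (Mj j) (Tj j) x) = (\<Prod>q'\<in>Q0. (of_bool (\<forall>j\<in>V. int q' dvd v q' j) :: int))"
  proof -
    have "(\<forall>j\<in>V. dsem m Q0 (Mj j) (Tj j) x) \<longleftrightarrow> (\<forall>q'\<in>Q0. \<forall>j\<in>V. int q' dvd v q' j)"
      unfolding dsem_def v_def cong_iff_dvd_diff by auto
    then show ?thesis using of_bool_ball_prod[OF Q0(1)] by simp
  qed
  have rhs_term: "sgnp Q0 \<phi> * of_bool (dsem m Q0 (Mphi Mj V \<phi>) (Tphi Tj V \<phi>) x) = (\<Prod>q'\<in>Q0. g q' (\<phi> q'))" for \<phi>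
  proof -
    have "dsem m Q0 (Mphi Mj V \<phi>) (Tphi Tj V \<phi>) x \<longleftrightarrow>
        (\<forall>q'\<in>Q0. [(\<Sum>j\<in>V. int (fst (\<phi> q') j) * v q' j) = int (snd (\<phi> q'))] (mod int q'))"
    proof -
      have "[lin m x (Mphi Mj V \<phi>) q' = Tphi Tj V \<phi> q'] (mod int q') \<longleftrightarrow>
            [(\<Sum>j\<in>V. int (fst (\<phi> q') j) * v q' j) = int (snd (\<phi> q'))] (mod int q')" for q'
      proof -
        have "lin m x (Mphi Mj V \<phi>) q' - Tphi Tj V \<phi> q' = (\<Sum>j\<in>V. int (fst (\<phi> q') j) * v q' j) - int (snd (\<phi> q'))"
          unfolding lin_Mphi Tphi_def v_def by (simp add: algebra_simps sum_subtractf)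
        then show ?thesis unfolding cong_iff_dvd_diff by simp
      qed
      then show ?thesis unfolding dsem_def by simp
    qed
    then have "(of_bool (dsem m Q0 (Mphi Mj V \<phi>) (Tphi Tj V \<phi>) x) :: int) =
        (\<Prod>q'\<in>Q0. of_bool ([(\<Sum>j\<in>V. int (fst (\<phi> q') j) * v q' j) = int (snd (\<phi> q'))] (mod int q')))"
      using of_bool_ball_prod[OF Q0(1)] by simp
    then show ?thesis unfolding sgnp_def g_def by (simp add: prod.distrib)
  qed
  have inner: "(\<Sum>ae\<in>PiE V (\<lambda>_. {..<q'}) \<times> {0, 1}. g q' ae) = int q' ^ card V * of_bool (\<forall>j\<in>V. int q' dvd v q' j)"
    if "q' \<in> Q0" for q'
  proof -
    have "(\<Sum>ae\<in>PiE V (\<lambda>_. {..<q'}) \<times> {0, 1}. g q' ae) = (\<Sum>a\<in>PiE V (\<lambda>_. {..<q'}). \<Sum>e\<in>{0::nat, 1}. g q' (a, e))"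
      by (rule sum.cartesian_product')
    also have "\<dots> = (\<Sum>a\<in>PiE V (\<lambda>_. {..<q'}). of_bool ([(\<Sum>j\<in>V. int (a j) * v q' j) = 0] (mod int q'))
                                   - of_bool ([(\<Sum>j\<in>V. int (a j) * v q' j) = 1] (mod int q')))"
      by (intro sum.cong refl) (simp add: g_def)
    also have "\<dots> = int q' ^ card V * of_bool (\<forall>j\<in>V. int q' dvd v q' j)"
      by (rule count_identity[OF V]) (use Q0 that in auto)
    finally show ?thesis .
  qed
  have "(\<Sum>\<phi>\<in>Phi V Q0. sgnp Q0 \<phi> * of_bool (dsem m Q0 (Mphi Mj V \<phi>) (Tphi Tj V \<phi>) x))
      = (\<Sum>\<phi>\<in>Phi V Q0. \<Prod>q'\<in>Q0. g q' (\<phi> q'))"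
    using rhs_term by simp
  also have "\<dots> = (\<Prod>q'\<in>Q0. \<Sum>ae\<in>PiE V (\<lambda>_. {..<q'}) \<times> {0, 1}. g q' ae)"
    unfolding Phi_def by (rule prod_sum_PiE[symmetric]) (use Q0 V in \<open>auto intro!: finite_PiE finite_cartesian_product\<close>)
  also have "\<dots> = (\<Prod>q'\<in>Q0. int q' ^ card V * of_bool (\<forall>j\<in>V. int q' dvd v q' j))"
    by (intro prod.cong refl inner)
  also have "\<dots> = (\<Prod>q'\<in>Q0. int q' ^ card V) * of_bool (\<forall>j\<in>V. dsem m Q0 (Mj j) (Tj j) x)"
    unfolding lhs by (simp add: prod.distrib)
  finally show ?thesis by simp
qed


lemma prime_power_dvd_choose:
  assumes p: "prime (p::nat)" and i: "0 < i" "i < p ^ e"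
  shows "p dvd (p ^ e choose i)"
proof (rule ccontr)
  assume nd: "\<not> p dvd (p ^ e choose i)"
  have pe0: "p ^ e > 0" using p by (simp add: prime_gt_0_nat)
  have "Suc (p ^ e - 1) * ((p ^ e - 1) choose (i - 1)) = (Suc (p ^ e - 1) choose Suc (i - 1)) * Suc (i - 1)"
    by (rule Suc_times_binomial_eq)
  moreover have "Suc (p ^ e - 1) = p ^ e" using pe0 by simp
  moreover have "Suc (i - 1) = i" using i by simp
  ultimately have eq: "p ^ e * ((p ^ e - 1) choose (i - 1)) = (p ^ e choose i) * i"
    by metis
  have "coprime (p ^ e) (p ^ e choose i)"
    using nd p by (simp add: coprime_power_left_iff prime_imp_coprime)
  moreover have "p ^ e dvd (p ^ e choose i) * i" using eq by (metis dvd_triv_left)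
  ultimately have "p ^ e dvd i" by (meson coprime_dvd_mult_right_iff)
  then show False using i by (meson nat_dvd_not_less)
qed

lemma choose_shift_cong:
  assumes p: "prime (p::nat)" and k: "k < p ^ e"
  shows "[(t + p ^ e) choose k = t choose k] (mod p)"
proof -
  have "(t + p ^ e) choose k = (\<Sum>i\<le>k. (p ^ e choose i) * (t choose (k - i)))"
    using vandermonde[of "p ^ e" t k] by (simp add: add.commute)
  also have "\<dots> = (p ^ e choose 0) * (t choose (k - 0)) + (\<Sum>i\<in>{1..k}. (p ^ e choose i) * (t choose (k - i)))"
  proof -
    have "{..k} = insert 0 {1..k}" by auto
    then show ?thesis by (simp add: sum.insert)
  qed
  also have "\<dots> = (t choose k) + (\<Sum>i\<in>{1..k}. (p ^ e choose i) * (t choose (k - i)))" by simp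
  finally have e: "(t + p ^ e) choose k = (t choose k) + (\<Sum>i\<in>{1..k}. (p ^ e choose i) * (t choose (k - i)))" .
  have "p dvd (\<Sum>i\<in>{1..k}. (p ^ e choose i) * (t choose (k - i)))"
    by (intro dvd_sum dvd_mult2 prime_power_dvd_choose[OF p]) (use k in auto)
  then obtain c where "(\<Sum>i\<in>{1..k}. (p ^ e choose i) * (t choose (k - i))) = p * c" by blast
  then show ?thesis unfolding e by (simp add: cong_def)
qed

lemma choose_mod_cong:
  assumes p: "prime (p::nat)" and k: "k < p ^ e"
  shows "[t choose k = (t mod p ^ e) choose k] (mod p)"
proof (induction t rule: less_induct)
  case (less t)
  show ?case
  proof (cases "t < p ^ e")
    case True then show ?thesis by simp
  next
    case False
    define t' where "t' = t - p ^ e"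
    have t: "t = t' + p ^ e" using False t'_def by simp
    have pe0: "p ^ e > 0" using p by (simp add: prime_gt_0_nat)
    have "[t choose k = t' choose k] (mod p)" unfolding t by (rule choose_shift_cong[OF p k])
    moreover have "[t' choose k = (t' mod p ^ e) choose k] (mod p)" using less[of t'] t pe0 by simp
    moreover have "t' mod p ^ e = t mod p ^ e" using t by simp
    ultimately show ?thesis by (metis cong_trans)
  qed
qed

lemma binomial_inversion:
  "(\<Sum>k\<le>u. (-1) ^ (k - u0) * int (k choose u0) * int (u choose k)) = of_bool (u = u0)"
proof (cases "u0 \<le> u")
  case False
  then show ?thesis by (intro trans[OF sum.neutral]) auto
next
  case True
  define d where "d = u - u0"
  have "(\<Sum>k\<le>u. (-1) ^ (k - u0) * int (k choose u0) * int (u choose k)) =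
        (\<Sum>k\<in>{u0..u}. (-1) ^ (k - u0) * int (k choose u0) * int (u choose k))"
    by (rule sum.mono_neutral_right) auto
  also have "\<dots> = (\<Sum>k\<in>{u0..u}. (-1) ^ (k - u0) * int (u choose u0) * int ((u - u0) choose (k - u0)))"
  proof (intro sum.cong refl)
    fix k assume "k \<in> {u0..u}"
    then have "(u choose k) * (k choose u0) = (u choose u0) * ((u - u0) choose (k - u0))"
      by (intro choose_mult) auto
    then show "(-1) ^ (k - u0) * int (k choose u0) * int (u choose k) = (-1) ^ (k - u0) * int (u choose u0) * int ((u - u0) choose (k - u0))"
      by (metis (no_types, lifting) mult.assoc mult.commute of_nat_mult)
  qed
  also have "\<dots> = (\<Sum>i\<in>{0..d}. (-1) ^ i * int (u choose u0) * int (d choose i))"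
    using sum.shift_bounds_cl_nat_ivl[of "\<lambda>k. (-1) ^ (k - u0) * int (u choose u0) * int ((u - u0) choose (k - u0))" 0 u0 d]
    unfolding d_def using True by simp
  also have "\<dots> = int (u choose u0) * (\<Sum>i\<le>d. (-1) ^ i * int (d choose i))"
    by (simp add: sum_distrib_left atLeast0AtMost algebra_simps)
  also have "\<dots> = of_bool (u = u0)"
  proof (cases "d = 0")
    case True then show ?thesis using \<open>u0 \<le> u\<close> by (simp add: d_def)
  next
    case False
    then have "(\<Sum>i\<le>d. (-1) ^ i * int (d choose i)) = 0" by (intro choose_alternating_sum) simp
    then show ?thesis using False by (simp add: d_def)
  qed
  finally show ?thesis .
qed

definition cc :: "nat \<Rightarrow> nat \<Rightarrow> int" where
  "cc u0 k = (-1) ^ (k - u0) * int (k choose u0)"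

lemma cc_sum_cong:
  assumes p: "prime (p::nat)"
  shows "[(\<Sum>k<p ^ e. cc u0 k * int (t choose k)) = of_bool (t mod p ^ e = u0)] (mod int p)"
proof -
  define u where "u = t mod p ^ e"
  have u: "u < p ^ e" using p by (simp add: u_def prime_gt_0_nat)
  have "[(\<Sum>k<p ^ e. cc u0 k * int (t choose k)) = (\<Sum>k<p ^ e. cc u0 k * int (u choose k))] (mod int p)"
  proof (intro cong_sum cong_mult cong_refl)
    fix k assume "k \<in> {..<p ^ e}"
    then show "[int (t choose k) = int (u choose k)] (mod int p)"
      unfolding u_def using choose_mod_cong[OF p, of k e t] by (simp add: cong_int_iff)
  qed
  also have "(\<Sum>k<p ^ e. cc u0 k * int (u choose k)) = (\<Sum>k\<le>u. cc u0 k * int (u choose k))"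
    by (rule sum.mono_neutral_right) (use u in auto)
  also have "\<dots> = of_bool (u = u0)" unfolding cc_def using binomial_inversion[where u=u and u0=u0] by simp
  finally show ?thesis unfolding u_def .
qed

lemma sum_subsets_card:
  assumes "finite Y"
  shows "(\<Sum>V\<in>{V. V \<subseteq> Y \<and> card V < M}. g (card V)) = (\<Sum>k<M. int (card Y choose k) * g k)"
proof (induction M)
  case 0 then show ?case by simp
next
  case (Suc M)
  have split: "{V. V \<subseteq> Y \<and> card V < Suc M} = {V. V \<subseteq> Y \<and> card V < M} \<union> {V. V \<subseteq> Y \<and> card V = M}" by auto
  have fin: "finite {V. V \<subseteq> Y \<and> card V < M}" "finite {V. V \<subseteq> Y \<and> card V = M}"
    using assms by (auto intro: finite_subset[of _ "Pow Y"])
  have "(\<Sum>V\<in>{V. V \<subseteq> Y \<and> card V < Suc M}. g (card V)) =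
      (\<Sum>V\<in>{V. V \<subseteq> Y \<and> card V < M}. g (card V)) + (\<Sum>V\<in>{V. V \<subseteq> Y \<and> card V = M}. g (card V))"
    unfolding split by (rule sum.union_disjoint) (use fin in auto)
  also have "(\<Sum>V\<in>{V. V \<subseteq> Y \<and> card V = M}. g (card V)) = int (card Y choose M) * g M"
    using n_subsets[OF assms, of M] by simp
  finally show ?case using Suc by simp
qed

lemma subset_sum_formula:
  fixes B :: nat and g :: "nat \<Rightarrow> int"
  assumes "Y \<subseteq> {..<B}"
  shows "(\<Sum>V\<in>{V. V \<subseteq> {..<B} \<and> card V < M}. g (card V) * of_bool (V \<subseteq> Y)) = (\<Sum>k<M. int (card Y choose k) * g k)"
proof -
  have fin: "finite {V. V \<subseteq> {..<B} \<and> card V < M}" by (rule finite_subset[of _ "Pow {..<B}"]) auto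
  have "(\<Sum>V\<in>{V. V \<subseteq> {..<B} \<and> card V < M}. g (card V) * of_bool (V \<subseteq> Y)) =
        (\<Sum>V\<in>{V. V \<subseteq> Y \<and> card V < M}. g (card V))"
    using assms by (intro sum.mono_neutral_cong_right fin) auto
  also have "\<dots> = (\<Sum>k<M. int (card Y choose k) * g k)"
    by (rule sum_subsets_card) (use assms finite_subset in blast)
  finally show ?thesis .
qed


lemma partition_blocks:
  fixes S :: "nat set"
  assumes "finite S" "card S \<le> N * B"
  shows "\<exists>Sb. (\<forall>j<B. Sb j \<subseteq> S \<and> card (Sb j) \<le> N) \<and> (\<forall>i\<in>S. \<exists>j<B. i \<in> Sb j)"
proof -
  define xs where "xs = sorted_list_of_set S"
  have sxs: "set xs = S" "length xs = card S" using assms(1) by (auto simp: xs_def)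
  define Sb where "Sb j = set (take N (drop (j * N) xs))" for j
  have "Sb j \<subseteq> S" for j unfolding Sb_def using sxs by (meson in_set_dropD in_set_takeD subsetI)
  moreover have "card (Sb j) \<le> N" for j unfolding Sb_def
    by (rule order_trans[OF card_length]) simp
  moreover have "\<exists>j<B. i \<in> Sb j" if "i \<in> S" for i
  proof -
    have "i \<in> set xs" using that sxs by simp
    then obtain a where a: "a < length xs" "xs ! a = i" by (auto simp: in_set_conv_nth)
    have "card S > 0" using that assms(1) card_gt_0_iff by blast
    then have N0: "N > 0" using assms(2) by (cases N) auto
    define j where "j = a div N"
    have "a < N * B" using a sxs assms(2) by simp
    then have jB: "j < B" unfolding j_def using N0 by (simp add: div_less_iff_less_mult mult.commute)
    have "a - j * N < N" unfolding j_def using N0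
      by (simp add: minus_div_mult_eq_mod)
    moreover have "j * N \<le> a" unfolding j_def by (simp add: mult.commute)
    ultimately have "take N (drop (j * N) xs) ! (a - j * N) = xs ! a" "a - j * N < length (take N (drop (j * N) xs))"
      using a by auto
    then have "xs ! a \<in> Sb j" unfolding Sb_def by (metis nth_mem)
    then show ?thesis using jB a by blast
  qed
  ultimately show ?thesis by blast
qed

lemma exists_exponent:
  assumes "prime (q::nat)" "D \<ge> 1"
  shows "\<exists>e. D < q ^ e \<and> q ^ e \<le> q * D"
proof -
  have q2: "q \<ge> 2" using assms(1) prime_ge_2_nat by blast
  have ex: "\<exists>e. D < q ^ e"
  proof -
    have "D < 2 ^ D" by (rule less_exp)
    also have "\<dots> \<le> q ^ D" using q2 by (simp add: power_mono)
    finally show ?thesis by blast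
  qed
  define e where "e = (LEAST e. D < q ^ e)"
  have e1: "D < q ^ e" unfolding e_def using ex by (rule LeastI_ex)
  have "e \<noteq> 0" using e1 assms(2) by (intro notI) simp
  then have "\<not> D < q ^ (e - 1)" unfolding e_def by (intro not_less_Least) (simp add: e_def[symmetric])
  then have "q ^ (e - 1) \<le> D" by simp
  then have "q * q ^ (e - 1) \<le> q * D" by simp
  then have "q ^ e \<le> q * D" using \<open>e \<noteq> 0\<close> by (cases e) auto
  then show ?thesis using e1 by blast
qed

lemma prod_prime_powers_dvd:
  assumes "finite Q" "\<forall>q\<in>Q. prime (q::nat)" "\<forall>q\<in>Q. q ^ E q dvd z"
  shows "(\<Prod>q\<in>Q. q ^ E q) dvd z"
  using assms
proof (induction Q rule: finite_induct)
  case empty then show ?case by simp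
next
  case (insert q Q)
  have cop: "coprime (q ^ E q) (\<Prod>q'\<in>Q. q' ^ E q')"
  proof -
    have "coprime (q ^ E q) (q' ^ E q')" if "q' \<in> Q" for q'
    proof -
      have "prime q" "prime q'" "q \<noteq> q'" using insert that by auto
      then have "coprime q q'" by (simp add: primes_coprime)
      then show ?thesis by simp
    qed
    then show ?thesis by (rule prod_coprime_right)
  qed
  have "(\<Prod>q'\<in>Q. q' ^ E q') dvd z" using insert by auto
  moreover have "q ^ E q dvd z" using insert by auto
  ultimately show ?case using insert cop by (simp add: divides_mult)
qed

lemma crt_eq:
  fixes t B :: nat
  assumes "finite Q" "\<forall>q\<in>Q. prime q" "t \<le> B" "\<forall>q\<in>Q. [t = B] (mod q ^ E q)" "B < (\<Prod>q\<in>Q. q ^ E q)"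
  shows "t = B"
proof -
  have "\<forall>q\<in>Q. q ^ E q dvd B - t"
  proof
    fix q assume "q \<in> Q"
    then have "[B = t] (mod q ^ E q)" using assms(4) cong_sym by blast
    then show "q ^ E q dvd B - t" using cong_altdef_nat assms(3) by blast
  qed
  then have "(\<Prod>q\<in>Q. q ^ E q) dvd B - t" using prod_prime_powers_dvd assms(1,2) by blast
  moreover have "B - t < (\<Prod>q\<in>Q. q ^ E q)" using assms(5) by linarith
  ultimately have "B - t = 0"
  proof (cases "B - t = 0")
    case False
    then have "0 < B - t" by simp
    from nat_dvd_not_less[OF this] \<open>B - t < (\<Prod>q\<in>Q. q ^ E q)\<close> \<open>(\<Prod>q\<in>Q. q ^ E q) dvd B - t\<close>
    show ?thesis by blast
  qed
  then show ?thesis using assms(3) by simp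
qed

lemma inverse_cong:
  fixes K q :: nat
  assumes "prime q" "\<not> q dvd K"
  shows "[int K ^ (q - 2) * int K = 1] (mod int q)"
proof -
  have q2: "q \<ge> 2" using assms(1) prime_ge_2_nat by blast
  have "[K ^ (q - 1) = 1] (mod q)" by (rule fermat_theorem[OF assms])
  moreover have "K ^ (q - 2) * K = K ^ (q - 1)" using q2
  proof -
    have "q - 1 = Suc (q - 2)" using q2 by simp
    then show ?thesis by (simp add: power_Suc2)
  qed
  ultimately have "[K ^ (q - 2) * K = 1] (mod q)" by simp
  then show ?thesis using cong_int_iff[of "K ^ (q - 2) * K" 1 q] by simp
qed

lemma lin_single: "lin m x {#(f, w)#} q = w q * of_bool (fev m x f)"
  by (simp add: lin_def)

lemma msz_single: "msz {#(f, w)#} = fsize f"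
  by (simp add: msz_def)

lemma msz_sum: "msz (\<Sum>j\<in>V. N j) = (\<Sum>j\<in>V. msz (N j))"
proof (cases "finite V")
  case True then show ?thesis by (induction V rule: finite_induct) (auto simp: msz_add, simp add: msz_def)
next
  case False then show ?thesis by (simp add: msz_def)
qed

lemma mem_sum_mset: "p \<in># (\<Sum>j\<in>V. N j) \<Longrightarrow> \<exists>j\<in>V. p \<in># N j"
proof (induction V rule: infinite_finite_induct)
  case (insert j V) then show ?case by (auto simp: sum.insert)
qed auto

lemma card_subsets_le:
  fixes B M :: nat
  assumes "B \<ge> 1"
  shows "card {V. V \<subseteq> {..<B} \<and> card V < M} \<le> M * B ^ M"
proof -
  have "int (card {V. V \<subseteq> {..<B} \<and> card V < M}) = (\<Sum>V\<in>{V. V \<subseteq> {..<B} \<and> card V < M}. (\<lambda>k. 1::int) (card V))"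
    by simp
  also have "\<dots> = (\<Sum>k<M. int (card {..<B} choose k) * 1)"
    by (rule sum_subsets_card) simp
  also have "\<dots> \<le> (\<Sum>k<M. int (B ^ M))"
  proof (intro sum_mono)
    fix k assume k: "k \<in> {..<M}"
    have "B choose k \<le> B ^ k"
      by (cases "k \<le> B") (auto simp: binomial_le_pow binomial_eq_0)
    also have "\<dots> \<le> B ^ M" using k assms by (intro power_increasing) auto
    finally show "int (card {..<B} choose k) * 1 \<le> int (B ^ M)" by simp
  qed
  also have "\<dots> = int (M * B ^ M)" by simp
  finally show ?thesis by linarith
qed


definition LV :: "nat \<Rightarrow> nat \<Rightarrow> nat \<Rightarrow> nat \<Rightarrow> nat \<Rightarrow> bool" where
  "LV m n l N s \<longleftrightarrow> (\<forall>p\<in>prime_factors m. \<forall>S. S \<subseteq> {..<n} \<longrightarrow> card S \<le> N \<longrightarrow>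
     (\<exists>M T. (\<forall>pr\<in>#M. gf m n (l - 1) (fst pr)) \<and> msz M \<le> s \<and>
        (\<forall>x. dsem m (prime_factors m - {p}) M T x \<longleftrightarrow> (\<forall>i\<in>S. x i))))"

definition Gam :: "nat \<Rightarrow> nat \<Rightarrow> nat" where
  "Gam m D = (2 * m * D) ^ (2 * m * (2 * m * D) + m + 5)"

lemma card_Phi_le:
  assumes "finite V" "P' \<subseteq> prime_factors m" "m > 0" "card V \<le> K"
  shows "card (Phi V P') \<le> (2 * m) ^ ((K + 1) * m)"
proof -
  have finP: "finite P'" using assms(2) finite_subset by blast
  have "card (Phi V P') = (\<Prod>q'\<in>P'. q' ^ card V * 2)" by (rule card_Phi[OF assms(1) finP])
  also have "\<dots> \<le> (\<Prod>q'\<in>P'. (2 * m) ^ (K + 1))"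
  proof (intro prod_mono conjI)
    fix q' assume "q' \<in> P'"
    then have "q' \<in> prime_factors m" using assms(2) by auto
    then have "prime q'" "q' dvd m" by auto
    then have q': "q' \<le> m" "q' > 0" using assms(3) by (auto simp: dvd_imp_le prime_gt_0_nat)
    have "q' ^ card V * 2 \<le> m ^ card V * 2" using q' by (simp add: power_mono)
    also have "\<dots> \<le> (2 * m) ^ K * (2 * m)"
    proof (intro mult_mono)
      have "m ^ card V \<le> (2 * m) ^ card V" by (simp add: power_mono)
      also have "\<dots> \<le> (2 * m) ^ K" using assms(3,4) by (intro power_increasing) auto
      finally show "m ^ card V \<le> (2 * m) ^ K" .
    qed (use assms(3) in auto)
    finally show "q' ^ card V * 2 \<le> (2 * m) ^ (K + 1)" by (simp add: ac_simps)
  qed auto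
  also have "\<dots> = (2 * m) ^ ((K + 1) * card P')" by (simp only: prod_constant power_mult)
  also have "\<dots> \<le> (2 * m) ^ ((K + 1) * m)"
  proof -
    have "card P' \<le> card (prime_factors m)" using assms(2) by (intro card_mono) auto
    also have "\<dots> \<le> m" using card_prime_factors_le assms(3) by blast
    finally have "(K + 1) * card P' \<le> (K + 1) * m" by (rule mult_left_mono) simp
    then show ?thesis using assms(3) by (intro power_increasing) auto
  qed
  finally show ?thesis .
qed


lemma gam_bound:
  fixes m D B c s :: nat
  assumes m: "m \<ge> 1" and D: "D \<ge> 1" and B: "B \<le> D ^ m" and c: "c \<le> m"
  shows "c * ((m * D) * B ^ (m * D)) * ((2 * m) ^ ((m * D + 1) * m)) * (1 + m * m * (m * D * s)) \<le> Gam m D * (1 + s)"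
proof -
  define W where "W = 2 * m * D"
  have W1: "W \<ge> 1" using m D by (simp add: W_def)
  have mW: "m \<le> W" using D m by (simp add: W_def)
  have mDW: "m * D \<le> W" by (simp add: W_def)
  have h1: "c \<le> W" using c mW by simp
  have h2: "(m * D) * B ^ (m * D) \<le> W * W ^ (m * W)"
  proof (intro mult_mono)
    have "B ^ (m * D) \<le> (D ^ m) ^ (m * D)" using B by (simp add: power_mono)
    also have "\<dots> = D ^ (m * (m * D))" by (simp add: power_mult)
    also have "\<dots> \<le> W ^ (m * (m * D))" using D m by (intro power_mono) (auto simp: W_def)
    also have "\<dots> \<le> W ^ (m * W)" using W1 mDW by (intro power_increasing) auto
    finally show "B ^ (m * D) \<le> W ^ (m * W)" .
  qed (use mDW in auto)
  have h3: "(2 * m) ^ ((m * D + 1) * m) \<le> W ^ (m * W + m)"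
  proof -
    have "(2 * m) ^ ((m * D + 1) * m) \<le> W ^ ((m * D + 1) * m)" using D m by (intro power_mono) (auto simp: W_def)
    also have "\<dots> \<le> W ^ (m * W + m)"
    proof (intro power_increasing W1)
      have "(m * D + 1) * m = m * (m * D) + m" by (simp add: algebra_simps)
      also have "\<dots> \<le> m * W + m" using mDW by simp
      finally show "(m * D + 1) * m \<le> m * W + m" .
    qed
    finally show ?thesis .
  qed
  have h4: "1 + m * m * (m * D * s) \<le> W ^ 3 * (1 + s)"
  proof -
    have "m * m * (m * D) \<le> W ^ 3" unfolding W_def using m D
      by (simp add: power3_eq_cube algebra_simps mult_le_mono)
    then have "m * m * (m * D) * s \<le> W ^ 3 * s" by (rule mult_le_mono1)
    then have "m * m * (m * D * s) \<le> W ^ 3 * s" by (simp add: mult.assoc)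
    moreover have "1 \<le> W ^ 3" using W1 by simp
    ultimately have "1 + m * m * (m * D * s) \<le> W ^ 3 + W ^ 3 * s" by linarith
    then show ?thesis by (simp add: algebra_simps)
  qed
  have e: "1 + 1 + m * W + (m * W + m) + 3 = 2 * m * W + m + 5" by simp
  have "c * ((m * D) * B ^ (m * D)) * ((2 * m) ^ ((m * D + 1) * m)) * (1 + m * m * (m * D * s))
      \<le> W * (W * W ^ (m * W)) * W ^ (m * W + m) * (W ^ 3 * (1 + s))"
    by (rule mult_mono[OF mult_mono[OF mult_mono[OF h1 h2] h3] h4]) auto
  also have "\<dots> = W ^ (1 + 1 + m * W + (m * W + m) + 3) * (1 + s)"
    unfolding power_add power_one_right by (simp only: ac_simps)
  also have "\<dots> = W ^ (2 * m * W + m + 5) * (1 + s)" by (simp only: e)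
  also have "\<dots> = Gam m D * (1 + s)" unfolding Gam_def W_def by simp
  finally show ?thesis .
qed

lemma sum_if_eq_out:
  "(\<Sum>V\<in>A. \<Sum>\<phi>\<in>C V. (if q = q1 then a V \<phi> else 0) * b V \<phi>) = (if q = q1 then (\<Sum>V\<in>A. \<Sum>\<phi>\<in>C V. a V \<phi> * b V \<phi>) else (0::int))"
  by (cases "q = q1") auto

lemma step:
  assumes m: "m > 0" and lv: "LV m n l N s" and l: "l \<ge> 1"
    and Q: "Q \<subseteq> prime_factors m" "Q \<noteq> {}" and D: "D \<ge> 1"
    and S: "S \<subseteq> {..<n}" "card S \<le> N * D ^ card Q"
  shows "\<exists>M T. (\<forall>pr\<in>#M. gf m n l (fst pr)) \<and> msz M \<le> Gam m D * (1 + s) \<and>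
          (\<forall>x. dsem m Q M T x \<longleftrightarrow> (\<forall>i\<in>S. x i))"
proof -
  define P where "P = prime_factors m"
  define B where "B = D ^ card Q"
  have B1: "B \<ge> 1" using D by (simp add: B_def)
  have finS: "finite S" using S(1) finite_subset by blast
  obtain Sb where Sb: "\<forall>j<B. Sb j \<subseteq> S \<and> card (Sb j) \<le> N" "\<forall>i\<in>S. \<exists>j<B. i \<in> Sb j"
    using partition_blocks[OF finS, of N B] S(2) unfolding B_def by blast
  have finQ: "finite Q" using Q(1) finite_subset by blast
  have primeQ: "\<forall>q\<in>Q. prime q" using Q(1) by auto
  have "\<forall>q\<in>Q. \<exists>e. D < q ^ e \<and> q ^ e \<le> q * D" using exists_exponent primeQ D by blast
  then obtain E where E: "\<forall>q\<in>Q. D < q ^ E q \<and> q ^ E q \<le> q * D" using bchoice by metis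
  have qm: "q \<le> m" if "q \<in> Q" for q
  proof -
    have "q dvd m" using that Q(1) by auto
    then show ?thesis using m by (rule dvd_imp_le)
  qed
  have Em: "q ^ E q \<le> m * D" if "q \<in> Q" for q using E that qm[OF that] by (meson dual_order.trans mult_le_mono1)
  define bok where "bok q j MT \<longleftrightarrow> (\<forall>pr\<in>#fst MT. gf m n (l - 1) (fst pr)) \<and> msz (fst MT) \<le> s \<and>
      (\<forall>x. dsem m (P - {q}) (fst MT) (snd MT) x \<longleftrightarrow> (\<forall>i\<in>Sb j. x i))" for q j MT
  have exb: "\<exists>MT. bok q j MT" if "q \<in> Q" "j < B" for q j
  proof -
    have "q \<in> prime_factors m" using that Q(1) by auto
    moreover have "Sb j \<subseteq> {..<n}" "card (Sb j) \<le> N" using Sb that S(1) by auto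
    ultimately obtain M T where "(\<forall>pr\<in>#M. gf m n (l - 1) (fst pr)) \<and> msz M \<le> s \<and>
        (\<forall>x. dsem m (prime_factors m - {q}) M T x \<longleftrightarrow> (\<forall>i\<in>Sb j. x i))"
      using lv unfolding LV_def by blast
    then show ?thesis unfolding bok_def P_def by (intro exI[of _ "(M, T)"]) simp
  qed
  define Mb where "Mb q j = fst (SOME MT. bok q j MT)" for q j
  define Tb where "Tb q j = snd (SOME MT. bok q j MT)" for q j
  have bokb: "(\<forall>pr\<in>#Mb q j. gf m n (l - 1) (fst pr)) \<and> msz (Mb q j) \<le> s \<and>
      (\<forall>x. dsem m (P - {q}) (Mb q j) (Tb q j) x \<longleftrightarrow> (\<forall>i\<in>Sb j. x i))" if "q \<in> Q" "j < B" for q j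
    using someI_ex[OF exb[OF that]] unfolding Mb_def Tb_def bok_def by simp
  define Vs where "Vs q = {V. V \<subseteq> {..<B} \<and> card V < q ^ E q}" for q
  have finVs: "finite (Vs q)" for q unfolding Vs_def by (rule finite_subset[of _ "Pow {..<B}"]) auto
  have VsB: "V \<subseteq> {..<B}" "finite V" if "V \<in> Vs q" for q V using that unfolding Vs_def by (auto intro: finite_subset)
  have finPm: "finite (P - {q})" for q unfolding P_def by simp
  have primePm: "\<forall>q'\<in>P - {q}. prime q'" for q unfolding P_def by auto
  have PmQ: "P - {q} \<subseteq> prime_factors m" for q unfolding P_def by auto
  define zok where "zok q V \<phi> F \<longleftrightarrow> gf m n l F \<and> (\<forall>x. fev m x F = dsem m (P - {q}) (Mphi (Mb q) V \<phi>) (Tphi (Tb q) V \<phi>) x)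
       \<and> fsize F \<le> 1 + m * m * msz (Mphi (Mb q) V \<phi>)" for q V \<phi> F
  have exz: "\<exists>F. zok q V \<phi> F" if "q \<in> Q" "V \<in> Vs q" for q V \<phi>
  proof -
    have good: "\<forall>pr\<in>#Mphi (Mb q) V \<phi>. gf m n (l - 1) (fst pr)"
    proof
      fix pr assume "pr \<in># Mphi (Mb q) V \<phi>"
      then obtain j p' where "j \<in> V" "p' \<in># Mb q j" "fst pr = fst p'" using Mphi_mem by metis
      moreover have "j < B" using \<open>j \<in> V\<close> VsB[OF that(2)] by auto
      ultimately show "gf m n (l - 1) (fst pr)" using bokb[OF that(1)] by auto
    qed
    from realize[OF PmQ m good] obtain F where
      "gf m n (Suc (l - 1)) F \<and> (\<forall>x. fev m x F = dsem m (P - {q}) (Mphi (Mb q) V \<phi>) (Tphi (Tb q) V \<phi>) x) \<and>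
       fsize F \<le> 1 + m * m * msz (Mphi (Mb q) V \<phi>)" by blast
    then show ?thesis unfolding zok_def using l by (intro exI[of _ F]) simp
  qed
  define Fz where "Fz q V \<phi> = (SOME F. zok q V \<phi> F)" for q V \<phi>
  have zF: "zok q V \<phi> (Fz q V \<phi>)" if "q \<in> Q" "V \<in> Vs q" for q V \<phi>
    using someI_ex[OF exz[OF that]] unfolding Fz_def by simp
  define KV where "KV q V = (\<Prod>q'\<in>P - {q}. q' ^ card V)" for q and V :: "nat set"
  define u0 where "u0 q = B mod q ^ E q" for q
  define wz where "wz q V \<phi> = cc (u0 q) (card V) * int (KV q V) ^ (q - 2) * sgnp (P - {q}) \<phi>" for q and V :: "nat set" and \<phi>
  define Mtop where "Mtop = (\<Sum>q\<in>Q. \<Sum>V\<in>Vs q. \<Sum>\<phi>\<in>Phi V (P - {q}).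
       {#(Fz q V \<phi>, \<lambda>q''. if q'' = q then wz q V \<phi> else 0)#})"
  define T where "T = (\<lambda>_::nat. 1::int)"
  have sem: "dsem m Q Mtop T x \<longleftrightarrow> (\<forall>i\<in>S. x i)" for x
  proof -
    define Y where "Y = {j \<in> {..<B}. \<forall>i\<in>Sb j. x i}"
    have YB: "Y \<subseteq> {..<B}" unfolding Y_def by auto
    have per_q: "[lin m x Mtop q = T q] (mod int q) \<longleftrightarrow> [card Y = B] (mod q ^ E q)" if qQ: "q \<in> Q" for q
    proof -
      have q2: "q \<ge> 2" using primeQ qQ prime_ge_2_nat by blast
      have "lin m x Mtop q = (\<Sum>q1\<in>Q. \<Sum>V\<in>Vs q1. \<Sum>\<phi>\<in>Phi V (P - {q1}).
            (if q = q1 then wz q1 V \<phi> else 0) * of_bool (fev m x (Fz q1 V \<phi>)))"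
        unfolding Mtop_def lin_sum lin_single by simp
      also have "\<dots> = (\<Sum>q1\<in>Q. if q = q1 then (\<Sum>V\<in>Vs q1. \<Sum>\<phi>\<in>Phi V (P - {q1}). wz q1 V \<phi> * of_bool (fev m x (Fz q1 V \<phi>))) else 0)"
        by (intro sum.cong refl sum_if_eq_out)
      also have "\<dots> = (\<Sum>V\<in>Vs q. \<Sum>\<phi>\<in>Phi V (P - {q}). wz q V \<phi> * of_bool (fev m x (Fz q V \<phi>)))"
        using qQ finQ by (simp add: sum.delta)
      also have "\<dots> = (\<Sum>V\<in>Vs q. cc (u0 q) (card V) * int (KV q V) ^ (q - 2) *
             (int (KV q V) * of_bool (\<forall>j\<in>V. dsem m (P - {q}) (Mb q j) (Tb q j) x)))"
      proof (intro sum.cong refl)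
        fix V assume V: "V \<in> Vs q"
        have "(\<Sum>\<phi>\<in>Phi V (P - {q}). wz q V \<phi> * of_bool (fev m x (Fz q V \<phi>))) =
              cc (u0 q) (card V) * int (KV q V) ^ (q - 2) *
              (\<Sum>\<phi>\<in>Phi V (P - {q}). sgnp (P - {q}) \<phi> * of_bool (dsem m (P - {q}) (Mphi (Mb q) V \<phi>) (Tphi (Tb q) V \<phi>) x))"
          unfolding sum_distrib_left wz_def using zF[OF qQ V] unfolding zok_def
          by (intro sum.cong refl) (simp add: algebra_simps)
        also have "(\<Sum>\<phi>\<in>Phi V (P - {q}). sgnp (P - {q}) \<phi> * of_bool (dsem m (P - {q}) (Mphi (Mb q) V \<phi>) (Tphi (Tb q) V \<phi>) x)) =
              (\<Prod>q'\<in>P - {q}. int q' ^ card V) * of_bool (\<forall>j\<in>V. dsem m (P - {q}) (Mb q j) (Tb q j) x)"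
          by (rule collapse[symmetric]) (use VsB[OF V] finPm primePm in auto)
        also have "(\<Prod>q'\<in>P - {q}. int q' ^ card V) = int (KV q V)" unfolding KV_def by simp
        finally show "(\<Sum>\<phi>\<in>Phi V (P - {q}). wz q V \<phi> * of_bool (fev m x (Fz q V \<phi>))) =
            cc (u0 q) (card V) * int (KV q V) ^ (q - 2) * (int (KV q V) * of_bool (\<forall>j\<in>V. dsem m (P - {q}) (Mb q j) (Tb q j) x))" .
      qed
      finally have lin_eq: "lin m x Mtop q = (\<Sum>V\<in>Vs q. cc (u0 q) (card V) * int (KV q V) ^ (q - 2) *
             (int (KV q V) * of_bool (\<forall>j\<in>V. dsem m (P - {q}) (Mb q j) (Tb q j) x)))" .
      have "[lin m x Mtop q = (\<Sum>V\<in>Vs q. cc (u0 q) (card V) * of_bool (V \<subseteq> Y))] (mod int q)"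
        unfolding lin_eq
      proof (intro cong_sum)
        fix V assume V: "V \<in> Vs q"
        have KVnd: "\<not> q dvd KV q V"
        proof
          assume "q dvd KV q V"
          then obtain q' where q': "q' \<in> P - {q}" "q dvd q' ^ card V" unfolding KV_def
            using primeQ qQ by (metis finPm prime_dvd_prod_iff)
          then have "q dvd q'" using primeQ qQ prime_dvd_power by blast
          moreover have "prime q'" using q' primePm by blast
          ultimately show False using q' primeQ qQ by (metis DiffD2 insertCI primes_dvd_imp_eq)
        qed
        have inv: "[int (KV q V) ^ (q - 2) * int (KV q V) = 1] (mod int q)"
          by (rule inverse_cong[OF _ KVnd]) (use primeQ qQ in auto)
        have dj: "dsem m (P - {q}) (Mb q j) (Tb q j) x \<longleftrightarrow> (\<forall>i\<in>Sb j. x i)" if "j \<in> V" for j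
        proof -
          have "j < B" using VsB[OF V] that by auto
          then show ?thesis using bokb[OF qQ, of j] by blast
        qed
        have eqb: "(\<forall>j\<in>V. dsem m (P - {q}) (Mb q j) (Tb q j) x) \<longleftrightarrow> V \<subseteq> Y"
          using VsB[OF V] dj unfolding Y_def by auto
        have "[cc (u0 q) (card V) * (int (KV q V) ^ (q - 2) * int (KV q V)) * of_bool (V \<subseteq> Y) =
               cc (u0 q) (card V) * 1 * of_bool (V \<subseteq> Y)] (mod int q)"
          by (intro cong_mult cong_refl inv)
        then show "[cc (u0 q) (card V) * int (KV q V) ^ (q - 2) * (int (KV q V) * of_bool (\<forall>j\<in>V. dsem m (P - {q}) (Mb q j) (Tb q j) x)) =
                    cc (u0 q) (card V) * of_bool (V \<subseteq> Y)] (mod int q)"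
          unfolding eqb by (simp add: algebra_simps)
      qed
      also have "(\<Sum>V\<in>Vs q. cc (u0 q) (card V) * of_bool (V \<subseteq> Y)) = (\<Sum>k<q ^ E q. int (card Y choose k) * cc (u0 q) k)"
        unfolding Vs_def by (rule subset_sum_formula[OF YB])
      also have "(\<Sum>k<q ^ E q. int (card Y choose k) * cc (u0 q) k) = (\<Sum>k<q ^ E q. cc (u0 q) k * int (card Y choose k))"
        by (simp add: mult.commute)
      finally have c1: "[lin m x Mtop q = of_bool (card Y mod q ^ E q = u0 q)] (mod int q)"
        using cc_sum_cong[of q "u0 q" "card Y" "E q"] primeQ qQ by (meson cong_trans)
      have "[lin m x Mtop q = T q] (mod int q) \<longleftrightarrow> [of_bool (card Y mod q ^ E q = u0 q) = (1::int)] (mod int q)"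
        using c1 unfolding T_def by (meson cong_sym cong_trans)
      also have "\<dots> \<longleftrightarrow> card Y mod q ^ E q = u0 q"
      proof (cases "card Y mod q ^ E q = u0 q")
        case False
        have "\<not> [0 = (1::int)] (mod int q)" using q2 by (simp add: cong_def)
        then show ?thesis using False by simp
      qed simp
      also have "\<dots> \<longleftrightarrow> [card Y = B] (mod q ^ E q)" unfolding u0_def cong_def by simp
      finally show ?thesis .
    qed
    have "dsem m Q Mtop T x \<longleftrightarrow> (\<forall>q\<in>Q. [card Y = B] (mod q ^ E q))"
      unfolding dsem_def using per_q by simp
    also have "\<dots> \<longleftrightarrow> card Y = B"
    proof
      assume h: "\<forall>q\<in>Q. [card Y = B] (mod q ^ E q)"
      have cY: "card Y \<le> B" using YB by (metis card_lessThan card_mono finite_lessThan)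
      have "B < (\<Prod>q\<in>Q. q ^ E q)"
      proof -
        have "B = (\<Prod>q\<in>Q. D)" unfolding B_def by simp
        also have "\<dots> < (\<Prod>q\<in>Q. q ^ E q)"
        proof -
          obtain q0 where "q0 \<in> Q" using Q(2) by blast
          moreover have "0 < q ^ E q" if "q \<in> Q" for q
            using primeQ that by (simp add: prime_gt_0_nat)
          ultimately show ?thesis using E finQ by (intro prod_mono_strict[of q0]) auto
        qed
        finally show ?thesis .
      qed
      then show "card Y = B" using crt_eq[OF finQ primeQ cY h] by blast
    qed simp
    also have "\<dots> \<longleftrightarrow> Y = {..<B}"
      using YB by (metis card_lessThan card_subset_eq finite_lessThan)
    also have "\<dots> \<longleftrightarrow> (\<forall>j<B. \<forall>i\<in>Sb j. x i)" unfolding Y_def by auto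
    also have "\<dots> \<longleftrightarrow> (\<forall>i\<in>S. x i)"
    proof
      assume h: "\<forall>j<B. \<forall>i\<in>Sb j. x i"
      show "\<forall>i\<in>S. x i"
      proof
        fix i assume "i \<in> S"
        then obtain j where "j < B" "i \<in> Sb j" using Sb(2) by blast
        then show "x i" using h by blast
      qed
    next
      assume h: "\<forall>i\<in>S. x i"
      show "\<forall>j<B. \<forall>i\<in>Sb j. x i"
      proof (intro allI impI ballI)
        fix j i assume "j < B" "i \<in> Sb j"
        then have "i \<in> S" using Sb(1) by blast
        then show "x i" using h by blast
      qed
    qed
    finally show ?thesis .
  qed
  have good: "\<forall>pr\<in>#Mtop. gf m n l (fst pr)"
  proof
    fix pr assume pr: "pr \<in># Mtop"
    have "\<exists>q\<in>Q. pr \<in># (\<Sum>V\<in>Vs q. \<Sum>\<phi>\<in>Phi V (P - {q}).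
       {#(Fz q V \<phi>, \<lambda>q''. if q'' = q then wz q V \<phi> else 0)#})"
      by (rule mem_sum_mset) (use pr in \<open>simp only: Mtop_def\<close>)
    then obtain q where q: "q \<in> Q" and q2: "pr \<in># (\<Sum>V\<in>Vs q. \<Sum>\<phi>\<in>Phi V (P - {q}).
       {#(Fz q V \<phi>, \<lambda>q''. if q'' = q then wz q V \<phi> else 0)#})" by (rule bexE)
    have "\<exists>V\<in>Vs q. pr \<in># (\<Sum>\<phi>\<in>Phi V (P - {q}).
       {#(Fz q V \<phi>, \<lambda>q''. if q'' = q then wz q V \<phi> else 0)#})"
      by (rule mem_sum_mset) (rule q2)
    then obtain V where V: "V \<in> Vs q" and V2: "pr \<in># (\<Sum>\<phi>\<in>Phi V (P - {q}).
       {#(Fz q V \<phi>, \<lambda>q''. if q'' = q then wz q V \<phi> else 0)#})" by (rule bexE)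
    have "\<exists>\<phi>\<in>Phi V (P - {q}). pr \<in># {#(Fz q V \<phi>, \<lambda>q''. if q'' = q then wz q V \<phi> else 0)#}"
      by (rule mem_sum_mset) (rule V2)
    then obtain \<phi> where "pr \<in># {#(Fz q V \<phi>, \<lambda>q''. if q'' = q then wz q V \<phi> else 0)#}" by (rule bexE)
    then have "fst pr = Fz q V \<phi>" by simp
    moreover have "gf m n l (Fz q V \<phi>)" using zF[OF q V] unfolding zok_def by (rule conjunct1)
    ultimately show "gf m n l (fst pr)" by simp
  qed
  have size: "msz Mtop \<le> Gam m D * (1 + s)"
  proof -
    define c0 where "c0 = 1 + m * m * (m * D * s)"
    define X1 where "X1 = (m * D) * B ^ (m * D)"
    define X2 where "X2 = (2 * m) ^ ((m * D + 1) * m)"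
    have cardV: "card V \<le> m * D" if "q \<in> Q" "V \<in> Vs q" for q V
      using that Em[OF that(1)] unfolding Vs_def by auto
    have fz_le: "fsize (Fz q V \<phi>) \<le> c0" if q: "q \<in> Q" and V: "V \<in> Vs q" for q V \<phi>
    proof -
      have "fsize (Fz q V \<phi>) \<le> 1 + m * m * msz (Mphi (Mb q) V \<phi>)" using zF[OF q V] unfolding zok_def by blast
      also have "msz (Mphi (Mb q) V \<phi>) = (\<Sum>j\<in>V. msz (Mb q j))" using msz_Mphi VsB[OF V] by blast
      also have "\<dots> \<le> (\<Sum>j\<in>V. s)"
      proof (intro sum_mono)
        fix j assume "j \<in> V"
        then have "j < B" using VsB[OF V] by auto
        then show "msz (Mb q j) \<le> s" using bokb[OF q] by blast
      qed
      also have "\<dots> = card V * s" by simp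
      also have "\<dots> \<le> m * D * s" using cardV[OF q V] by (rule mult_le_mono1)
      finally show ?thesis unfolding c0_def by simp
    qed
    have "msz Mtop = (\<Sum>q\<in>Q. \<Sum>V\<in>Vs q. \<Sum>\<phi>\<in>Phi V (P - {q}). fsize (Fz q V \<phi>))"
      unfolding Mtop_def msz_sum msz_single by simp
    also have "\<dots> \<le> (\<Sum>q\<in>Q. \<Sum>V\<in>Vs q. X2 * c0)"
    proof (intro sum_mono)
      fix q V assume q: "q \<in> Q" and V: "V \<in> Vs q"
      have "(\<Sum>\<phi>\<in>Phi V (P - {q}). fsize (Fz q V \<phi>)) \<le> card (Phi V (P - {q})) * c0"
        using sum_bounded_above[of "Phi V (P - {q})" "\<lambda>\<phi>. fsize (Fz q V \<phi>)" c0] fz_le[OF q V] by simp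
      also have "\<dots> \<le> X2 * c0"
        unfolding X2_def by (intro mult_le_mono1 card_Phi_le VsB[OF V] PmQ m cardV[OF q V])
      finally show "(\<Sum>\<phi>\<in>Phi V (P - {q}). fsize (Fz q V \<phi>)) \<le> X2 * c0" .
    qed
    also have "\<dots> \<le> (\<Sum>q\<in>Q. X1 * (X2 * c0))"
    proof (intro sum_mono)
      fix q assume q: "q \<in> Q"
      have "(\<Sum>V\<in>Vs q. X2 * c0) = card (Vs q) * (X2 * c0)" by simp
      also have "card (Vs q) \<le> X1"
      proof -
        have "card (Vs q) \<le> q ^ E q * B ^ (q ^ E q)" unfolding Vs_def by (rule card_subsets_le[OF B1])
        also have "\<dots> \<le> (m * D) * B ^ (m * D)"
          using Em[OF q] B1 by (intro mult_mono power_increasing) auto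
        finally show ?thesis unfolding X1_def .
      qed
      then have "card (Vs q) * (X2 * c0) \<le> X1 * (X2 * c0)" by (rule mult_le_mono1)
      finally show "(\<Sum>V\<in>Vs q. X2 * c0) \<le> X1 * (X2 * c0)" .
    qed
    also have "\<dots> = card Q * X1 * X2 * c0" by (simp add: mult.assoc)
    also have "\<dots> \<le> Gam m D * (1 + s)"
      unfolding X1_def X2_def c0_def
    proof (rule gam_bound)
      show "1 \<le> m" using m by simp
      show "1 \<le> D" using D .
      have cQ: "card Q \<le> m"
      proof -
        have "card Q \<le> card (prime_factors m)" using Q(1) by (intro card_mono) auto
        also have "\<dots> \<le> m" using card_prime_factors_le m by blast
        finally show ?thesis .
      qed
      then show "card Q \<le> m" .
      show "B \<le> D ^ m" unfolding B_def using D cQ by (intro power_increasing) auto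
    qed
    finally show ?thesis .
  qed
  show ?thesis using good size sem by blast
qed


lemma LV_base:
  assumes m: "m > 0" and r: "card (prime_factors m) \<ge> 2"
  shows "LV m n 1 1 0"
  unfolding LV_def
proof (intro ballI allI impI)
  fix p S assume p: "p \<in> prime_factors m" and S: "S \<subseteq> {..<n}" "card S \<le> 1"
  have ne: "prime_factors m - {p} \<noteq> {}"
  proof
    assume "prime_factors m - {p} = {}"
    then have "prime_factors m \<subseteq> {p}" by auto
    then have "card (prime_factors m) \<le> card {p}" by (intro card_mono) auto
    then have "card (prime_factors m) \<le> 1" by simp
    then show False using r by simp
  qed
  show "\<exists>M T. (\<forall>pr\<in>#M. gf m n (1 - 1) (fst pr)) \<and> msz M \<le> 0 \<and>
          (\<forall>x. dsem m (prime_factors m - {p}) M T x \<longleftrightarrow> (\<forall>i\<in>S. x i))"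
  proof (cases "S = {}")
    case True
    have "dsem m (prime_factors m - {p}) {#} (\<lambda>_. 0) x" for x by (simp add: dsem_def lin_def)
    then show ?thesis using True by (intro exI[of _ "{#}"] exI[of _ "\<lambda>_. 0::int"]) (simp add: msz_def)
  next
    case False
    have finS: "finite S" using S(1) finite_subset by blast
    have "card S > 0" using False finS by (simp add: card_gt_0_iff)
    then have "card S = 1" using S(2) by simp
    then obtain i where Si: "S = {i}" by (rule card_1_singletonE)
    have i: "i < n" using S(1) Si by auto
    have sem: "dsem m (prime_factors m - {p}) {#(FV i, \<lambda>_. 1)#} (\<lambda>_. 1) x \<longleftrightarrow> x i" for x
    proof -
      have "[of_bool (x i) = (1::int)] (mod int q) \<longleftrightarrow> x i" if "q \<in> prime_factors m - {p}" for q
      proof -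
        have "q \<ge> 2" using that prime_ge_2_nat by auto
        then have "\<not> [0 = (1::int)] (mod int q)" by (simp add: cong_def)
        then show ?thesis by (cases "x i") auto
      qed
      then show ?thesis unfolding dsem_def lin_def using ne by auto
    qed
    show ?thesis using Si i sem
      by (intro exI[of _ "{#(FV i, \<lambda>_. 1::int)#}"] exI[of _ "\<lambda>_. 1::int"]) (auto simp: msz_def gf_def)
  qed
qed

lemma LV_step:
  assumes m: "m > 0" and r: "card (prime_factors m) \<ge> 2" and lv: "LV m n l N s" and l: "l \<ge> 1" and D: "D \<ge> 1"
  shows "LV m n (Suc l) (N * D ^ (card (prime_factors m) - 1)) (Gam m D * (1 + s))"
  unfolding LV_def
proof (intro ballI allI impI)
  fix p S assume p: "p \<in> prime_factors m" and S: "S \<subseteq> {..<n}" "card S \<le> N * D ^ (card (prime_factors m) - 1)"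
  have cQ: "card (prime_factors m - {p}) = card (prime_factors m) - 1" using p by simp
  have ne: "prime_factors m - {p} \<noteq> {}"
  proof
    assume "prime_factors m - {p} = {}"
    then have "card (prime_factors m - {p}) = 0" by simp
    with cQ r show False by simp
  qed
  obtain M T where "(\<forall>pr\<in>#M. gf m n l (fst pr)) \<and> msz M \<le> Gam m D * (1 + s) \<and>
          (\<forall>x. dsem m (prime_factors m - {p}) M T x \<longleftrightarrow> (\<forall>i\<in>S. x i))"
    using step[OF m lv l _ ne D S(1)] S(2) cQ by auto
  then show "\<exists>M T. (\<forall>pr\<in>#M. gf m n (Suc l - 1) (fst pr)) \<and> msz M \<le> Gam m D * (1 + s) \<and>
          (\<forall>x. dsem m (prime_factors m - {p}) M T x \<longleftrightarrow> (\<forall>i\<in>S. x i))" by auto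
qed

primrec sb :: "nat \<Rightarrow> nat \<Rightarrow> nat \<Rightarrow> nat" where
  "sb m D 0 = 0"
| "sb m D (Suc k) = Gam m D * (1 + sb m D k)"

lemma LV_iter:
  assumes m: "m > 0" and r: "card (prime_factors m) \<ge> 2" and D: "D \<ge> 1"
  shows "LV m n (Suc k) (D ^ ((card (prime_factors m) - 1) * k)) (sb m D k)"
proof (induction k)
  case 0 then show ?case using LV_base[OF m r] by simp
next
  case (Suc k)
  have "LV m n (Suc (Suc k)) (D ^ ((card (prime_factors m) - 1) * k) * D ^ (card (prime_factors m) - 1)) (Gam m D * (1 + sb m D k))"
    by (rule LV_step[OF m r Suc _ D]) simp
  then show ?case by (simp add: power_add mult.commute)
qed

fun pad :: "nat \<Rightarrow> form \<Rightarrow> form" where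
  "pad 0 F = F"
| "pad (Suc k) F = FG {1} [pad k F]"

lemma pad_props:
  assumes "m \<ge> 2"
  shows "fev m x (pad k F) = fev m x F" "fdepth (pad k F) = fdepth F + k" "fsize (pad k F) = fsize F + k"
    "fvars (pad k F) = fvars F" "fAok m (pad k F) = fAok m F"
  using assms by (induction k) auto

lemma final_form:
  assumes m: "m > 0" and r: "card (prime_factors m) \<ge> 2" and D: "D \<ge> 1" and h: "h \<ge> 2"
    and nD: "n \<le> D ^ ((card (prime_factors m) - 1) * (h - 2) + card (prime_factors m))"
  shows "\<exists>F. fvars F \<subseteq> {..<n} \<and> fAok m F \<and> fdepth F = h \<and> (\<forall>x. fev m x F = (\<forall>i<n. x i)) \<and>
      fsize F \<le> 1 + m * m * (Gam m D * (1 + sb m D (h - 2))) + h"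
proof -
  define r where "r = card (prime_factors m)"
  have "m \<noteq> 1"
  proof
    assume "m = 1"
    then have "card (prime_factors m) = 0" by simp
    with r show False by simp
  qed
  then have m2: "m \<ge> 2" using m by simp
  have lv: "LV m n (Suc (h - 2)) (D ^ ((r - 1) * (h - 2))) (sb m D (h - 2))"
    unfolding r_def by (rule LV_iter[OF m r D])
  have "prime_factors m \<noteq> {}" using r by auto
  have S: "{..<n} \<subseteq> {..<n}" "card {..<n} \<le> D ^ ((r - 1) * (h - 2)) * D ^ card (prime_factors m)"
    using nD by (auto simp: r_def power_add)
  obtain M T where MT: "\<forall>pr\<in>#M. gf m n (Suc (h - 2)) (fst pr)" "msz M \<le> Gam m D * (1 + sb m D (h - 2))"
      "\<forall>x. dsem m (prime_factors m) M T x \<longleftrightarrow> (\<forall>i\<in>{..<n}. x i)"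
    using step[OF m lv _ _ \<open>prime_factors m \<noteq> {}\<close> D S] by auto
  obtain F0 where F0: "gf m n (Suc (Suc (h - 2))) F0" "\<forall>x. fev m x F0 = dsem m (prime_factors m) M T x"
      "fsize F0 \<le> 1 + m * m * msz M"
    using realize[OF _ m MT(1), of "prime_factors m" T] by auto
  have "Suc (Suc (h - 2)) = h" using h by simp
  then have dF0: "fdepth F0 \<le> h" using F0(1) unfolding gf_def by simp
  define F where "F = pad (h - fdepth F0) F0"
  have "fdepth F = h" unfolding F_def using pad_props[OF m2] dF0 by simp
  moreover have "fvars F \<subseteq> {..<n}" "fAok m F" unfolding F_def using pad_props[OF m2] F0(1) by (auto simp: gf_def)
  moreover have "\<forall>x. fev m x F = (\<forall>i<n. x i)" unfolding F_def using pad_props[OF m2] F0(2) MT(3) by auto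
  moreover have "fsize F \<le> 1 + m * m * (Gam m D * (1 + sb m D (h - 2))) + h"
  proof -
    have "fsize F = fsize F0 + (h - fdepth F0)" unfolding F_def using pad_props[OF m2] by simp
    also have "\<dots> \<le> 1 + m * m * msz M + h" using F0(3) by simp
    also have "\<dots> \<le> 1 + m * m * (Gam m D * (1 + sb m D (h - 2))) + h" using MT(2) by simp
    finally show ?thesis .
  qed
  ultimately show ?thesis by blast
qed


lemma sb_bound: "Gam m D \<ge> 1 \<Longrightarrow> 1 + sb m D k \<le> (2 * Gam m D) ^ k"
proof (induction k)
  case 0 then show ?case by simp
next
  case (Suc k)
  have "1 + sb m D (Suc k) = 1 + Gam m D * (1 + sb m D k)" by simp
  also have "\<dots> \<le> 2 * Gam m D * (1 + sb m D k)"
  proof -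
    have "1 \<le> Gam m D * (1 + sb m D k)" using Suc.prems by simp
    then show ?thesis by simp
  qed
  also have "\<dots> \<le> 2 * Gam m D * (2 * Gam m D) ^ k" using Suc by (intro mult_le_mono2) simp
  finally show ?case by simp
qed

lemma le_pow_self: "(W::nat) \<ge> 2 \<Longrightarrow> x \<le> W ^ x"
proof -
  assume W: "W \<ge> 2"
  have "x < 2 ^ x" by (rule less_exp)
  also have "\<dots> \<le> W ^ x" using W by (simp add: power_mono)
  finally show ?thesis by simp
qed

lemma aux_lin: "Y \<le> X \<Longrightarrow> 1 \<le> X \<Longrightarrow> 1 + a * Y + h \<le> (1 + a + h) * (X::nat)"
proof -
  assume "Y \<le> X" "1 \<le> X"
  then have "a * Y \<le> a * X" "h \<le> h * X" by simp_all
  moreover have "(1 + a + h) * X = X + a * X + h * X" by (simp add: algebra_simps)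
  ultimately show ?thesis using \<open>1 \<le> X\<close> by linarith
qed

definition Cst :: "nat \<Rightarrow> nat \<Rightarrow> nat" where
  "Cst m h = h * (4 * m * m + m + 6) + m * m + h + 1"

lemma nat_size_bound:
  assumes m: "m \<ge> 2" and D: "D \<ge> 1" and h: "h \<ge> 2"
  shows "1 + m * m * (Gam m D * (1 + sb m D (h - 2))) + h \<le> (2 * m * D) ^ (Cst m h * D)"
proof -
  define W where "W = 2 * m * D"
  define g where "g = 2 * m * W + m + 5"
  have "2 * 1 * 1 \<le> 2 * m * D" using m D by (intro mult_le_mono) auto
  then have W2: "W \<ge> 2" by (simp add: W_def)
  have Gam: "Gam m D = W ^ g" unfolding Gam_def W_def g_def by simp
  have G1: "Gam m D \<ge> 1" using W2 Gam by simp
  have G2: "2 * Gam m D \<le> W ^ (g + 1)" using W2 Gam by simp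
  have "1 + m * m * (Gam m D * (1 + sb m D (h - 2))) + h \<le> 1 + m * m * (Gam m D * (2 * Gam m D) ^ (h - 2)) + h"
  proof -
    have "Gam m D * (1 + sb m D (h - 2)) \<le> Gam m D * (2 * Gam m D) ^ (h - 2)"
      using sb_bound[OF G1, of "h - 2"] by (rule mult_le_mono2)
    then show ?thesis by simp
  qed
  also have "\<dots> \<le> (1 + m * m + h) * (2 * Gam m D) ^ (h - 1)"
  proof -
    have hh: "(2 * Gam m D) ^ (h - 1) = 2 * Gam m D * (2 * Gam m D) ^ (h - 2)"
      using h by (metis Suc_diff_Suc Suc_1 less_le_trans lessI power_Suc diff_Suc_1 Suc_diff_le)
    have p1: "1 \<le> (2 * Gam m D) ^ (h - 1)" using G1 by simp
    have "Gam m D * (2 * Gam m D) ^ (h - 2) \<le> (2 * Gam m D) ^ (h - 1)" unfolding hh by simp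
    from aux_lin[OF this p1, of "m * m" h] show ?thesis .
  qed
  also have "\<dots> \<le> W ^ (1 + m * m + h) * (W ^ (g + 1)) ^ (h - 1)"
    by (intro mult_mono le_pow_self[OF W2] power_mono G2) auto
  also have "\<dots> = W ^ (1 + m * m + h + (g + 1) * (h - 1))" by (simp only: power_add power_mult)
  also have "\<dots> \<le> W ^ (Cst m h * D)"
  proof (intro power_increasing)
    have "(g + 1) * (h - 1) \<le> (4 * m * m * D + m + 6) * h"
      unfolding g_def W_def by (intro mult_le_mono) (auto simp: algebra_simps)
    also have "\<dots> \<le> (4 * m * m + m + 6) * D * h"
    proof (intro mult_le_mono1)
      have "(m + 6) * 1 \<le> (m + 6) * D" using D by (rule mult_le_mono2)
      then show "4 * m * m * D + m + 6 \<le> (4 * m * m + m + 6) * D" by (simp add: algebra_simps)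
    qed
    finally have a: "(g + 1) * (h - 1) \<le> h * (4 * m * m + m + 6) * D" by (simp add: algebra_simps)
    have "(m * m + h + 1) * 1 \<le> (m * m + h + 1) * D" using D by (rule mult_le_mono2)
    then have b: "1 + m * m + h \<le> (m * m + h + 1) * D" by simp
    show "1 + m * m + h + (g + 1) * (h - 1) \<le> Cst m h * D"
      using a b unfolding Cst_def by (simp add: algebra_simps)
  qed (use W2 in auto)
  finally show ?thesis unfolding W_def .
qed


lemma real_bound:
  fixes n m k k' C :: nat
  assumes m: "m \<ge> 1" and n: "n \<ge> 4 * m" "n \<ge> 2" and k: "k \<ge> 1" "k \<le> k'" and C: "C > 0"
  defines "D \<equiv> nat \<lceil>real n powr (1 / real k')\<rceil>"
  shows "D \<ge> 1" "n \<le> D ^ k'"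
    "real ((2 * m * D) ^ (C * D)) \<le> 2 powr ((4 * real C / ln 2) * real n powr (1 / real k) * ln (real n))"
proof -
  define a' where "a' = real n powr (1 / real k')"
  define a where "a = real n powr (1 / real k)"
  have n1: "real n \<ge> 1" using n by simp
  have k'1: "k' \<ge> 1" using k by simp
  have a'1: "a' \<ge> 1" unfolding a'_def using n1 by (intro ge_one_powr_ge_zero) auto
  have Dr: "real D = of_int \<lceil>a'\<rceil>" unfolding D_def a'_def using a'1 a'_def by simp
  have Dge: "real D \<ge> a'" using Dr by simp
  have Dle: "real D \<le> 2 * a'" using Dr a'1 by linarith
  show D1: "D \<ge> 1" using Dge a'1 by simp
  have "real n = a' ^ k'"
  proof -
    have "a' ^ k' = real n powr (1 / real k' * real k')" unfolding a'_def
      using n1 by (simp add: powr_realpow[symmetric] powr_powr)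
    also have "\<dots> = real n" using k'1 by simp
    finally show ?thesis by simp
  qed
  also have "\<dots> \<le> real D ^ k'" using a'1 Dge by (intro power_mono) auto
  finally show "n \<le> D ^ k'" by (metis of_nat_le_iff of_nat_power)
  have a'a: "a' \<le> a" unfolding a'_def a_def using n1 k by (intro powr_mono) (auto simp: frac_le)
  have a'n: "a' \<le> real n"
  proof -
    have "a' \<le> real n powr 1" unfolding a'_def using n1 k'1 by (intro powr_mono) auto
    then show ?thesis using n1 by simp
  qed
  have pos: "real (2 * m * D) > 0" using m D1 by simp
  have "real (2 * m * D) \<le> real n * real n"
  proof -
    have "real (2 * m * D) = 2 * real m * real D" by simp
    also have "\<dots> \<le> 2 * real m * (2 * real n)" using Dle a'n m by (intro mult_left_mono) auto
    also have "\<dots> = real (4 * m) * real n" by simp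
    also have "\<dots> \<le> real n * real n" using n by (intro mult_right_mono) auto
    finally show ?thesis .
  qed
  then have lnle: "ln (real (2 * m * D)) \<le> 2 * ln (real n)"
    using pos n1 by (metis ln_le_cancel_iff ln_mult mult_2 mult_pos_pos not_less of_nat_0_less_iff order.strict_trans1 zero_less_one)
  have "real ((2 * m * D) ^ (C * D)) = real (2 * m * D) ^ (C * D)" by simp
  also have "\<dots> = 2 powr (log 2 (real (2 * m * D)) * real (C * D))"
  proof -
    have e1: "2 powr (log 2 (real (2 * m * D))) = real (2 * m * D)" using pos by (intro powr_log_cancel) auto
    have e2: "real (2 * m * D) powr real (C * D) = real (2 * m * D) ^ (C * D)" by (rule powr_realpow[OF pos])
    have "2 powr (log 2 (real (2 * m * D)) * real (C * D)) = (2 powr (log 2 (real (2 * m * D)))) powr real (C * D)"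
      by (simp only: powr_powr)
    also have "\<dots> = real (2 * m * D) ^ (C * D)" by (simp only: e1 e2)
    finally show ?thesis by simp
  qed
  also have "\<dots> \<le> 2 powr ((4 * real C / ln 2) * a * ln (real n))"
  proof (intro powr_mono)
    have lg: "log 2 (real (2 * m * D)) \<le> 2 * ln (real n) / ln 2"
      unfolding log_def using lnle by (intro divide_right_mono) auto
    have lnn: "ln (real n) \<ge> 0" using n1 by simp
    have "1 * 1 \<le> 2 * m * D" using m D1 by (intro mult_le_mono) auto
    then have "real (2 * m * D) \<ge> 1" by (metis of_nat_1 of_nat_le_iff mult_1)
    then have lgnn: "log 2 (real (2 * m * D)) \<ge> 0" using pos by (intro zero_le_log_cancel_iff[THEN iffD2]) auto
    have "log 2 (real (2 * m * D)) * real (C * D) \<le> (2 * ln (real n) / ln 2) * (real C * (2 * a))"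
    proof (intro mult_mono lg)
      show "real (C * D) \<le> real C * (2 * a)" using Dle a'a C by (simp add: mult_left_mono)
    qed (use lnn lgnn in auto)
    also have "\<dots> = (4 * real C / ln 2) * a * ln (real n)" by (simp add: field_simps)
    finally show "log 2 (real (2 * m * D)) * real (C * D) \<le> (4 * real C / ln 2) * a * ln (real n)" .
  qed simp
  finally show "real ((2 * m * D) ^ (C * D)) \<le> 2 powr ((4 * real C / ln 2) * real n powr (1 / real k) * ln (real n))"
    unfolding a_def .
qed


theorem theorem1p2:
  fixes h m :: nat
  assumes "h \<ge> 3" and "m \<ge> 1" and "omega_m m \<ge> 2"
  shows "\<exists>c>0. \<exists>N. \<forall>n\<ge>N. \<exists>C.
           is_CC_circuit h m n C \<and> computes m n C (AND_fun n) \<and>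
           real (csize C) \<le> 2 powr (c * real n powr
              (1 / real ((omega_m m - 1) * (h - 2) + varpi_m m)) * ln (real n))"
proof -
  define r where "r = card (prime_factors m)"
  define k where "k = (omega_m m - 1) * (h - 2) + varpi_m m"
  define k' where "k' = (r - 1) * (h - 2) + r"
  have r2: "card (prime_factors m) \<ge> 2" using assms(3) unfolding omega_m_def .
  have m0: "m > 0" using assms(2) by simp
  have "m \<noteq> 1"
  proof
    assume "m = 1"
    then have "card (prime_factors m) = 0" by simp
    with r2 show False by simp
  qed
  then have m2: "m \<ge> 2" using assms(2) by simp
  have vr: "varpi_m m \<le> r" unfolding varpi_m_def r_def by (intro card_mono) auto
  have k1: "k \<ge> 1"
  proof -
    have "1 \<le> (omega_m m - 1) * (h - 2)" using assms(1,3) by (simp; linarith)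
    then show ?thesis unfolding k_def by linarith
  qed
  have kk': "k \<le> k'" unfolding k_def k'_def using vr by (simp add: omega_m_def r_def)
  define Cc where "Cc = Cst m h"
  have Cc0: "Cc > 0" unfolding Cc_def Cst_def by simp
  define c where "c = 4 * real Cc / ln 2"
  have c0: "c > 0" unfolding c_def using Cc0 by simp
  have main: "\<exists>C. is_CC_circuit h m n C \<and> computes m n C (AND_fun n) \<and>
           real (csize C) \<le> 2 powr (c * real n powr (1 / real k) * ln (real n))" if n: "n \<ge> 4 * m + 2" for n
  proof -
    define D where "D = nat \<lceil>real n powr (1 / real k')\<rceil>"
    have n1: "n \<ge> 4 * m" "n \<ge> 2" using n by auto
    note rb = real_bound[OF assms(2) n1 k1 kk' Cc0, folded D_def]
    have nD: "n \<le> D ^ ((card (prime_factors m) - 1) * (h - 2) + card (prime_factors m))"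
      using rb(2) unfolding k'_def r_def .
    obtain F where F: "fvars F \<subseteq> {..<n}" "fAok m F" "fdepth F = h" "\<forall>x. fev m x F = (\<forall>i<n. x i)"
        "fsize F \<le> 1 + m * m * (Gam m D * (1 + sb m D (h - 2))) + h"
      using final_form[OF m0 r2 rb(1) _ nD] assms(1) by auto
    obtain C where C: "is_CC_circuit h m n C" "\<forall>x. circ_eval m n C x = fev m x F" "csize C = fsize F"
      using form_circuit[OF F(1,2,3)] assms(1) by auto
    have comp: "computes m n C (AND_fun n)" unfolding computes_def AND_fun_def using C(2) F(4) by simp
    have "csize C \<le> (2 * m * D) ^ (Cc * D)"
      using C(3) F(5) nat_size_bound[OF m2 rb(1), of h] assms(1) unfolding Cc_def by simp
    then have "real (csize C) \<le> real ((2 * m * D) ^ (Cc * D))" by (simp only: of_nat_le_iff)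
    also have "\<dots> \<le> 2 powr (c * real n powr (1 / real k) * ln (real n))" using rb(3) unfolding c_def .
    finally show ?thesis using C(1) comp by blast
  qed
  show ?thesis unfolding k_def[symmetric] using c0 main by blast
qed

end
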